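(* Let $f\in\mathbb{F}$ be piecewise linear with $N+1$ facet points $0=\alpha_0<\dots<\alpha_N=1$ and symmetric, i.e. $f^{-1}=f$ where $f^{-1}(\alpha):=\inf\{t\in[0,1]: f(t)\le\alpha\}$. Then there exist $K\le\lfloor N/2\rfloor+1$, values $\epsilon_0,\dots,\epsilon_{K-1}\in[0,\infty]$ and weights $w_0,\dots,w_{K-1}\ge0$ with $\sum_k w_k=1$ such that $\mathcal{C}(f)$ is (up to $\equiv$) the visible probabilistic choice of the channels $C_{\epsilon_k,0}$ with weights $w_k$, i.e. $\mathcal{C}(f)\equiv\bigoplus_{k} w_k\,C_{\epsilon_k,0}$.
   Context: Channels: fix two inputs $D_0, D_1$. A two-row channel with output set $\mathcal{Y}$ is a $2\times|\mathcal{Y}|$ matrix with nonnegative entries whose rows sum to $1$ (rows indexed by $D_0,D_1$); $\mathbb{C}_2$ is the set of such channels. Refinement: $C\sqsubseteq C'$ iff $C\cdot W=C'$ for some row-stochastic matrix $W$; $C\equiv C'$ iff both $C\sqsubseteq C'$ and $C'\sqsubseteq C$; $\min$ is greatest lower bound in $(\mathbb{C}_2,\sqsubseteq)$. $\mathbb{F}$ is the set of convex functions $f:[0,1]\to[0,1]$ with $f(\alpha)\le1-\alpha$. $f$ is piecewise linear with facet points $\alpha_0<\dots<\alpha_N$ if $f$ is affine on each $[\alpha_i,\alpha_{i+1}]$. For $\alpha\in[0,1]$, $f^\alpha$ is the $2\times2$ channel with rows $(1-\alpha,\ \alpha)$ and $(f(\alpha),\ 1-f(\alpha))$, and $\mathcal{C}(f):=\min_{\alpha\in[0,1]}f^\alpha$.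 For $\epsilon\in[0,\infty)$, $C_{\epsilon,0}$ is the randomized-response channel with rows $(\frac{e^\epsilon}{1+e^\epsilon},\frac{1}{1+e^\epsilon})$ and $(\frac{1}{1+e^\epsilon},\frac{e^\epsilon}{1+e^\epsilon})$; $C_{\infty,0}$ is the $2\times2$ identity channel. Multi-way visible choice $\bigoplus_k w_k C_k$: output set the disjoint union of the output sets of the $C_k$, with entry $w_k (C_k)_{x,y}$ at output $y$ of the $k$-th copy. *)

theory Defs
  imports "HOL-Analysis.Analysis" "HOL-Library.Nat_Bijection" "HOL-Library.Extended_Real"
begin

text \<open>A two-row channel: a finite output set Y (output labels are natural numbers)
 and a matrix M; row False is input D0, row True is input D1.
 Entries outside Y are required to be 0.\<close>
type_synonym chan = "nat set \<times> (bool \<Rightarrow> nat \<Rightarrow> real)"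

definition is_chan :: "chan \<Rightarrow> bool" where
  "is_chan C \<longleftrightarrow> finite (fst C) \<and> (\<forall>x y. 0 \<le> snd C x y)
     \<and> (\<forall>x. (\<Sum>y\<in>fst C. snd C x y) = 1) \<and> (\<forall>x y. y \<notin> fst C \<longrightarrow> snd C x y = 0)"

definition refines :: "chan \<Rightarrow> chan \<Rightarrow> bool" where
  "refines C C' \<longleftrightarrow> is_chan C \<and> is_chan C' \<and>
     (\<exists>W :: nat \<Rightarrow> nat \<Rightarrow> real.
        (\<forall>y\<in>fst C. \<forall>z\<in>fst C'. 0 \<le> W y z)
      \<and> (\<forall>y\<in>fst C. (\<Sum>z\<in>fst C'. W y z) = 1)
      \<and> (\<forall>x. \<forall>z\<in>fst C'. (\<Sum>y\<in>fst C. snd C x y * W y z) = snd C' x z))"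

definition chan_equiv :: "chan \<Rightarrow> chan \<Rightarrow> bool" where
  "chan_equiv C C' \<longleftrightarrow> refines C C' \<and> refines C' C"

definition is_glb_chan :: "chan set \<Rightarrow> chan \<Rightarrow> bool" where
  "is_glb_chan S D \<longleftrightarrow> is_chan D \<and> (\<forall>C\<in>S. refines D C)
     \<and> (\<forall>L. is_chan L \<and> (\<forall>C\<in>S. refines L C) \<longrightarrow> refines L D)"

definition chan_min :: "chan set \<Rightarrow> chan" where
  "chan_min S = (SOME D. is_glb_chan S D)"

definition in_F :: "(real \<Rightarrow> real) \<Rightarrow> bool" where
  "in_F f \<longleftrightarrow> convex_on {0..1} f \<and> (\<forall>a\<in>{0..1}. 0 \<le> f a \<and> f a \<le> 1 \<and> f a \<le> 1 - a)"

definition piecewise_linear :: "(real \<Rightarrow> real) \<Rightarrow> nat \<Rightarrow> (nat \<Rightarrow> real) \<Rightarrow> bool" where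
  "piecewise_linear f N a \<longleftrightarrow> (\<forall>i<N. a i < a (Suc i)) \<and>
     (\<forall>i<N. \<exists>m c. \<forall>t\<in>{a i..a (Suc i)}. f t = m * t + c)"

definition finv :: "(real \<Rightarrow> real) \<Rightarrow> real \<Rightarrow> real" where
  "finv f a = Inf {t \<in> {0..1}. f t \<le> a}"

definition f_chan :: "(real \<Rightarrow> real) \<Rightarrow> real \<Rightarrow> chan" where
  "f_chan f a = ({0, 1}, (\<lambda>x y. if y = 0 then (if x then f a else 1 - a)
                               else if y = 1 then (if x then 1 - f a else a) else 0))"

definition C_of :: "(real \<Rightarrow> real) \<Rightarrow> chan" where
  "C_of f = chan_min {f_chan f a | a. a \<in> {0..1}}"

definition rr_chan :: "ereal \<Rightarrow> chan" where
  "rr_chan e = ({0, 1}, (\<lambda>x y.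
     if y \<notin> {0, 1} then 0
     else if e = \<infinity> then (if (y = 1) = x then 1 else 0)
     else (if (y = 1) = x then exp (real_of_ereal e) / (1 + exp (real_of_ereal e))
           else 1 / (1 + exp (real_of_ereal e)))))"

definition vchoice :: "nat \<Rightarrow> (nat \<Rightarrow> real) \<Rightarrow> (nat \<Rightarrow> chan) \<Rightarrow> chan" where
  "vchoice K w C = ((\<Union>k<K. (\<lambda>y. prod_encode (k, y)) ` fst (C k)),
     (\<lambda>x z. case prod_decode z of (k, y) \<Rightarrow>
        if k < K \<and> y \<in> fst (C k) then w k * snd (C k) x y else 0))"

end

theory Submission
  imports Defs
begin


definition RS :: "'a set \<Rightarrow> ('a \<Rightarrow> real) \<Rightarrow> ('a \<Rightarrow> real) \<Rightarrow> real \<Rightarrow> real" where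
  "RS Y s x l = (\<Sum>y\<in>Y. s y * max 0 (x y - l))"

lemma pos_convex:
  fixes c u v t :: real
  assumes "0 \<le> t" "t \<le> 1"
  shows "max 0 (c - ((1-t)*u + t* v)) \<le> (1-t) * max 0 (c - u) + t * max 0 (c - v)"
proof -
  have e: "c - ((1-t)*u + t* v) = (1-t)*(c-u) + t*(c-v)" by (simp add: algebra_simps)
  have "(1-t)*(c-u) \<le> (1-t)*max 0 (c-u)" using assms by (intro mult_left_mono) auto
  moreover have "t*(c-v) \<le> t*max 0 (c-v)" using assms by (intro mult_left_mono) auto
  moreover have "0 \<le> (1-t)*max 0 (c-u)" "0 \<le> t*max 0 (c-v)" using assms by auto
  ultimately show ?thesis unfolding e by (intro max.boundedI) linarith+
qed

lemma RS_convex: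
  assumes "\<forall>y. 0 \<le> s y" "0 \<le> t" "t \<le> 1"
  shows "RS Y s x ((1-t)*u + t* v) \<le> (1-t) * RS Y s x u + t * RS Y s x v"
proof -
  have "RS Y s x ((1-t)*u + t* v) \<le> (\<Sum>y\<in>Y. (1-t) * (s y * max 0 (x y - u)) + t * (s y * max 0 (x y - v)))"
    unfolding RS_def
  proof (rule sum_mono)
    fix y assume "y \<in> Y"
    have "s y * max 0 (x y - ((1-t)*u + t* v)) \<le> s y * ((1-t) * max 0 (x y - u) + t * max 0 (x y - v))"
      using assms pos_convex[OF assms(2,3)] by (intro mult_left_mono) auto
    then show "s y * max 0 (x y - ((1-t)*u + t* v)) \<le> (1-t) * (s y * max 0 (x y - u)) + t * (s y * max 0 (x y - v))"
      by (simp add: algebra_simps)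
  qed
  also have "\<dots> = (1-t) * RS Y s x u + t * RS Y s x v"
    unfolding RS_def by (simp add: sum.distrib sum_distrib_left)
  finally show ?thesis .
qed

lemma RS_lin:
  assumes sep: "\<forall>y\<in>Y. 0 < s y \<longrightarrow> x y \<le> x1 \<or> x2 \<le> x y" and nn: "\<forall>y. 0 \<le> s y"
    and "x1 \<le> l" "l \<le> x2"
  shows "RS Y s x l = (\<Sum>y\<in>Y. s y * (if x2 \<le> x y then x y else 0)) - l * (\<Sum>y\<in>Y. s y * (if x2 \<le> x y then 1 else 0))"
  unfolding RS_def sum_distrib_left sum_subtractf[symmetric]
proof (rule sum.cong[OF refl])
  fix y assume y: "y \<in> Y"
  show "s y * max 0 (x y - l) = s y * (if x2 \<le> x y then x y else 0) - l * (s y * (if x2 \<le> x y then 1 else 0))"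
  proof (cases "s y = 0")
    case True then show ?thesis by simp
  next
    case False
    then have "0 < s y" using nn by (metis order_le_less)
    then have "x y \<le> x1 \<or> x2 \<le> x y" using sep y by auto
    then show ?thesis using assms(3,4) by (auto simp: max_def algebra_simps)
  qed
qed

lemma sum_upd2:
  fixes s g :: "'a \<Rightarrow> real"
  assumes "finite Y" "y1 \<in> Y" "y2 \<in> Y"
  shows "(\<Sum>y\<in>Y. (s y - (if y = y1 then al else 0) - (if y = y2 then be else 0)) * g y)
     = (\<Sum>y\<in>Y. s y * g y) - al * g y1 - be * g y2"
proof -
  have "(\<Sum>y\<in>Y. (s y - (if y = y1 then al else 0) - (if y = y2 then be else 0)) * g y)
     = (\<Sum>y\<in>Y. s y * g y - (if y = y1 then al * g y else 0) - (if y = y2 then be * g y else 0))"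
    by (rule sum.cong) (simp_all add: algebra_simps)
  also have "\<dots> = (\<Sum>y\<in>Y. s y * g y) - (\<Sum>y\<in>Y. (if y = y1 then al * g y else 0)) - (\<Sum>y\<in>Y. (if y = y2 then be * g y else 0))"
    by (simp add: sum_subtractf)
  also have "\<dots> = (\<Sum>y\<in>Y. s y * g y) - al * g y1 - be * g y2"
    using assms by (simp add: sum.delta)
  finally show ?thesis .
qed

lemma sum_upd1:
  fixes s g :: "'a \<Rightarrow> real"
  assumes "finite Y" "y1 \<in> Y"
  shows "(\<Sum>y\<in>Y. (s y - (if y = y1 then al else 0)) * g y) = (\<Sum>y\<in>Y. s y * g y) - al * g y1"
proof -
  have "(\<Sum>y\<in>Y. (s y - (if y = y1 then al else 0)) * g y)
     = (\<Sum>y\<in>Y. s y * g y - (if y = y1 then al * g y else 0))"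
    by (rule sum.cong) (simp_all add: algebra_simps)
  also have "\<dots> = (\<Sum>y\<in>Y. s y * g y) - al * g y1"
    using assms by (simp add: sum_subtractf sum.delta)
  finally show ?thesis .
qed

lemma RS_upd2:
  assumes "finite Y" "y1 \<in> Y" "y2 \<in> Y"
  shows "RS Y (\<lambda>y. s y - (if y = y1 then al else 0) - (if y = y2 then be else 0)) x l
     = RS Y s x l - al * max 0 (x y1 - l) - be * max 0 (x y2 - l)"
  unfolding RS_def by (rule sum_upd2[OF assms])

lemma RS_upd1:
  assumes "finite Y" "y1 \<in> Y"
  shows "RS Y (\<lambda>y. s y - (if y = y1 then al else 0)) x l = RS Y s x l - al * max 0 (x y1 - l)"
  unfolding RS_def by (rule sum_upd1[OF assms])

lemma RS_nonneg: "\<forall>y. 0 \<le> s y \<Longrightarrow> 0 \<le> RS Y s x l"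
  unfolding RS_def by (intro sum_nonneg) auto

lemma D_concave:
  assumes nnA: "\<forall>y. 0 \<le> sa y" and nnB: "\<forall>z. 0 \<le> sb z"
    and sep: "\<forall>y\<in>Y. 0 < sa y \<longrightarrow> xa y \<le> x1 \<or> x2 \<le> xa y"
    and "x1 \<le> u" "u \<le> l" "l \<le> v" "v \<le> x2" "u < v"
  shows "(v-l)*(RS Y sa xa u - RS Z sb xb u) + (l-u)*(RS Y sa xa v - RS Z sb xb v)
     \<le> (v-u) * (RS Y sa xa l - RS Z sb xb l)"
proof -
  define t where "t = (l-u)/(v-u)"
  have t0: "0 \<le> t" "t \<le> 1" using assms unfolding t_def by (auto simp: divide_simps)
  have vu: "v - u \<noteq> 0" using assms by simp
  have tv: "t*(v-u) = l-u" unfolding t_def using vu by simp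
  have lt: "l = (1-t)*u + t* v"
  proof -
    have "(1-t)*u + t* v = u + t*(v-u)" by (simp add: algebra_simps)
    then show ?thesis using tv by simp
  qed
  have c: "RS Z sb xb l \<le> (1-t) * RS Z sb xb u + t * RS Z sb xb v"
    unfolding lt by (rule RS_convex[OF nnB t0])
  have e1: "(v-u)*(1-t) = v - l" "(v-u)*t = l-u" using assms unfolding t_def by (auto simp: field_simps)
  have c2: "(v-u) * RS Z sb xb l \<le> (v-l) * RS Z sb xb u + (l-u) * RS Z sb xb v"
  proof -
    have "(v-u) * RS Z sb xb l \<le> (v-u) * ((1-t) * RS Z sb xb u + t * RS Z sb xb v)"
      using c assms by (intro mult_left_mono) auto
    also have "\<dots> = ((v-u)*(1-t)) * RS Z sb xb u + ((v-u)*t) * RS Z sb xb v" by (simp add: algebra_simps)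
    finally show ?thesis unfolding e1 .
  qed
  let ?A = "(\<Sum>y\<in>Y. sa y * (if x2 \<le> xa y then xa y else 0))"
  let ?B = "(\<Sum>y\<in>Y. sa y * (if x2 \<le> xa y then 1 else 0))"
  have la: "RS Y sa xa w = ?A - w * ?B" if "x1 \<le> w" "w \<le> x2" for w
    by (rule RS_lin[OF sep nnA that])
  have "(v-u) * RS Y sa xa l = (v-l) * RS Y sa xa u + (l-u) * RS Y sa xa v"
    using assms by (simp add: la algebra_simps)
  with c2 show ?thesis by (simp add: algebra_simps)
qed

lemma kink:
  assumes nnA: "\<forall>y. 0 \<le> sa y" and nnB: "\<forall>z. 0 \<le> sb z"
    and ramp: "\<forall>l. RS Z sb xb l \<le> RS Y sa xa l"
    and sep: "\<forall>y\<in>Y. 0 < sa y \<longrightarrow> xa y \<le> x1 \<or> x2 \<le> xa y"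
    and fZ: "finite Z" and z0: "z0 \<in> Z" "xb z0 = x" and x: "x1 < x" "x < x2" and pz: "0 < sb z0"
  shows "RS Z sb xb x < RS Y sa xa x"
proof (rule ccontr)
  assume H: "\<not> ?thesis"
  define d where "d = min (x - x1) (x2 - x)"
  have d: "0 < d" "x1 \<le> x - d" "x + d \<le> x2" using x unfolding d_def by auto
  let ?A = "(\<Sum>y\<in>Y. sa y * (if x2 \<le> xa y then xa y else 0))"
  let ?B = "(\<Sum>y\<in>Y. sa y * (if x2 \<le> xa y then 1 else 0))"
  have la: "RS Y sa xa w = ?A - w * ?B" if "x1 \<le> w" "w \<le> x2" for w
    by (rule RS_lin[OF sep nnA that])
  have A: "RS Y sa xa (x-d) + RS Y sa xa (x+d) = 2 * RS Y sa xa x"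
    using d x by (simp add: la algebra_simps)
  have "(\<Sum>z\<in>Z. 2 * (sb z * max 0 (xb z - x)) + (if z = z0 then sb z0 * d else 0))
      \<le> (\<Sum>z\<in>Z. sb z * max 0 (xb z - (x-d)) + sb z * max 0 (xb z - (x+d)))"
  proof (rule sum_mono)
    fix z assume "z \<in> Z"
    have m: "2 * max 0 (xb z - x) + (if z = z0 then d else 0) \<le> max 0 (xb z - (x-d)) + max 0 (xb z - (x+d))"
      using d z0 by (auto simp: max_def)
    have "sb z * (2 * max 0 (xb z - x) + (if z = z0 then d else 0)) \<le> sb z * (max 0 (xb z - (x-d)) + max 0 (xb z - (x+d)))"
      using nnB m by (intro mult_left_mono) auto
    then show "2 * (sb z * max 0 (xb z - x)) + (if z = z0 then sb z0 * d else 0) \<le> sb z * max 0 (xb z - (x-d)) + sb z * max 0 (xb z - (x+d))"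
      by (auto simp: algebra_simps split: if_splits)
  qed
  then have "2 * RS Z sb xb x + sb z0 * d \<le> RS Z sb xb (x-d) + RS Z sb xb (x+d)"
    using fZ z0 unfolding RS_def by (simp add: sum.distrib sum_distrib_left)
  moreover have "0 < sb z0 * d" using pz d by simp
  moreover have "RS Z sb xb (x-d) \<le> RS Y sa xa (x-d)" "RS Z sb xb (x+d) \<le> RS Y sa xa (x+d)" using ramp by auto
  ultimately show False using A H by linarith
qed

lemma fusion_ok:
  assumes nnA: "\<forall>y. 0 \<le> sa y" and nnB: "\<forall>z. 0 \<le> sb z"
    and ramp: "\<forall>l. RS Z sb xb l \<le> RS Y sa xa l"
    and sep: "\<forall>y\<in>Y. 0 < sa y \<longrightarrow> xa y \<le> x1 \<or> x2 \<le> xa y"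
    and fY: "finite Y" and fZ: "finite Z" and z0: "z0 \<in> Z" "xb z0 = x"
    and y1: "y1 \<in> Y" "xa y1 = x1" and y2: "y2 \<in> Y" "xa y2 = x2"
    and x: "x1 < x" "x < x2" and m: "0 \<le> m"
    and slack: "m*(x-x1)*(x2-x)/(x2-x1) \<le> RS Y sa xa x - RS Z sb xb x"
  shows "RS Z (\<lambda>z. sb z - (if z = z0 then m else 0)) xb l
     \<le> RS Y (\<lambda>y. sa y - (if y = y1 then m*(x2-x)/(x2-x1) else 0) - (if y = y2 then m*(x-x1)/(x2-x1) else 0)) xa l"
proof -
  define al where "al = m*(x2-x)/(x2-x1)"
  define be where "be = m*(x-x1)/(x2-x1)"
  define D where "D = (\<lambda>l. RS Y sa xa l - RS Z sb xb l)"
  define T where "T = be * (x2 - x)"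
  have D0: "0 \<le> D w" for w using ramp unfolding D_def by (simp add: algebra_simps)
  have dpos: "0 < x2 - x1" using x by simp
  have dne: "x2 - x1 \<noteq> 0" using x by simp
  have TD: "T \<le> D x" using slack unfolding T_def be_def D_def by (simp add: algebra_simps)
  have goal: "al * max 0 (x1 - l) + be * max 0 (x2 - l) - m * max 0 (x - l) \<le> D l"
  proof -
    consider "l \<le> x1" | "x1 \<le> l" "l \<le> x" | "x \<le> l" "l \<le> x2" | "x2 \<le> l" by linarith
    then show ?thesis
    proof cases
      case 1
      have ha: "al*(x2-x1) = m*(x2-x)" unfolding al_def using dne by simp
      have hb: "be*(x2-x1) = m*(x-x1)" unfolding be_def using dne by simp
      have "(x2-x1) * (al*(x1-l) + be*(x2-l) - m*(x-l)) = (al*(x2-x1))*(x1-l) + (be*(x2-x1))*(x2-l) - m*(x2-x1)*(x-l)"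
        by (simp add: algebra_simps)
      also have "\<dots> = m*(x2-x)*(x1-l) + m*(x-x1)*(x2-l) - m*(x2-x1)*(x-l)" using ha hb by simp
      also have "\<dots> = 0" by (simp add: algebra_simps)
      finally have "al * (x1 - l) + be * (x2 - l) - m * (x - l) = 0" using dne by simp
      moreover have "max 0 (x1 - l) = x1 - l" "max 0 (x2 - l) = x2 - l" "max 0 (x - l) = x - l"
        using 1 x by auto
      ultimately show ?thesis using D0[of l] by simp
    next
      case 2
      have cc: "(x-l)*D x1 + (l-x1)*D x \<le> (x-x1) * D l"
        unfolding D_def using 2 x by (intro D_concave[OF nnA nnB sep]) auto
      have "(l-x1) * T \<le> (l-x1) * D x" using TD 2 by (intro mult_left_mono) auto
      moreover have "0 \<le> (x-l)*D x1" using D0 2 by simp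
      ultimately have "(l-x1) * T \<le> (x-x1) * D l" using cc by linarith
      moreover have "(x-x1) * (be * (x2 - l) - m * (x - l)) = (l-x1) * T"
        unfolding T_def be_def using dne by (simp add: field_simps)
      ultimately have "(x-x1) * (be * (x2 - l) - m * (x - l)) \<le> (x-x1) * D l" by simp
      then have "be * (x2 - l) - m * (x - l) \<le> D l" using x by simp
      moreover have "max 0 (x1 - l) = 0" "max 0 (x2 - l) = x2 - l" "max 0 (x - l) = x - l"
        using 2 x by auto
      ultimately show ?thesis by simp
    next
      case 3
      have cc: "(x2-l)*D x + (l-x)*D x2 \<le> (x2-x) * D l"
        unfolding D_def using 3 x by (intro D_concave[OF nnA nnB sep]) auto
      have "(x2-l) * T \<le> (x2-l) * D x" using TD 3 by (intro mult_left_mono) auto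
      moreover have "0 \<le> (l-x)*D x2" using D0 3 by simp
      ultimately have "(x2-l) * T \<le> (x2-x) * D l" using cc by linarith
      moreover have "(x2-l) * T = (x2-x) * (be * (x2 - l))" unfolding T_def by simp
      ultimately have "(x2-x) * (be * (x2 - l)) \<le> (x2-x) * D l" by simp
      then have "be * (x2 - l) \<le> D l" using x by simp
      moreover have "max 0 (x1 - l) = 0" "max 0 (x2 - l) = x2 - l" "max 0 (x - l) = 0"
        using 3 x by auto
      ultimately show ?thesis by simp
    next
      case 4
      then have "max 0 (x1 - l) = 0" "max 0 (x2 - l) = 0" "max 0 (x - l) = 0"
        using x by auto
      then show ?thesis using D0[of l] by simp
    qed
  qed
  show ?thesis
    unfolding RS_upd1[OF fZ z0(1)] RS_upd2[OF fY y1(1) y2(1)] y1 y2 z0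
    using goal unfolding D_def al_def be_def by (simp add: algebra_simps)
qed

definition coup :: "'a set \<Rightarrow> 'b set \<Rightarrow> ('a \<Rightarrow> real) \<Rightarrow> ('b \<Rightarrow> real) \<Rightarrow> ('a \<Rightarrow> real) \<Rightarrow> ('b \<Rightarrow> real) \<Rightarrow> ('a \<Rightarrow> 'b \<Rightarrow> real) \<Rightarrow> bool" where
  "coup Y Z xa xb sa sb p \<longleftrightarrow> (\<forall>y z. 0 \<le> p y z) \<and> (\<forall>y\<in>Y. (\<Sum>z\<in>Z. p y z) = sa y)
     \<and> (\<forall>z\<in>Z. (\<Sum>y\<in>Y. p y z) = sb z) \<and> (\<forall>z\<in>Z. (\<Sum>y\<in>Y. p y z * xa y) = sb z * xb z)"

lemma coup_add:
  assumes fY: "finite Y" and fZ: "finite Z" and y1: "y1 \<in> Y" and y2: "y2 \<in> Y" and z0: "z0 \<in> Z"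
    and al: "0 \<le> al" and be: "0 \<le> be" and c: "coup Y Z xa xb sa' sb' p'"
    and ea: "\<And>y. sa y = sa' y + (if y = y1 then al else 0) + (if y = y2 then be else 0)"
    and eb: "\<And>z. sb z = sb' z + (if z = z0 then al + be else 0)"
    and ex: "al * xa y1 + be * xa y2 = (al + be) * xb z0"
  shows "coup Y Z xa xb sa sb (\<lambda>y z. p' y z + (if y = y1 \<and> z = z0 then al else 0) + (if y = y2 \<and> z = z0 then be else 0))"
  unfolding coup_def
proof (intro conjI ballI allI)
  fix y z show "0 \<le> p' y z + (if y = y1 \<and> z = z0 then al else 0) + (if y = y2 \<and> z = z0 then be else 0)"
    using c al be unfolding coup_def by auto
next
  fix y assume y: "y \<in> Y"
  have "(\<Sum>z\<in>Z. p' y z + (if y = y1 \<and> z = z0 then al else 0) + (if y = y2 \<and> z = z0 then be else 0))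
    = (\<Sum>z\<in>Z. p' y z + (if z = z0 then (if y = y1 then al else 0) else 0) + (if z = z0 then (if y = y2 then be else 0) else 0))"
    by (rule sum.cong) auto
  also have "\<dots> = (\<Sum>z\<in>Z. p' y z) + (\<Sum>z\<in>Z. (if z = z0 then (if y = y1 then al else 0) else 0)) + (\<Sum>z\<in>Z. (if z = z0 then (if y = y2 then be else 0) else 0))"
    by (simp only: sum.distrib)
  also have "\<dots> = sa y" using c y z0 fZ ea[of y] unfolding coup_def by (simp add: sum.delta)
  finally show "(\<Sum>z\<in>Z. p' y z + (if y = y1 \<and> z = z0 then al else 0) + (if y = y2 \<and> z = z0 then be else 0)) = sa y" .
next
  fix z assume z: "z \<in> Z"
  have "(\<Sum>y\<in>Y. p' y z + (if y = y1 \<and> z = z0 then al else 0) + (if y = y2 \<and> z = z0 then be else 0))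
    = (\<Sum>y\<in>Y. p' y z + (if y = y1 then (if z = z0 then al else 0) else 0) + (if y = y2 then (if z = z0 then be else 0) else 0))"
    by (rule sum.cong) auto
  also have "\<dots> = (\<Sum>y\<in>Y. p' y z) + (\<Sum>y\<in>Y. (if y = y1 then (if z = z0 then al else 0) else 0)) + (\<Sum>y\<in>Y. (if y = y2 then (if z = z0 then be else 0) else 0))"
    by (simp only: sum.distrib)
  also have "\<dots> = sb z" using c z y1 y2 fY eb[of z] unfolding coup_def by (simp add: sum.delta)
  finally show "(\<Sum>y\<in>Y. p' y z + (if y = y1 \<and> z = z0 then al else 0) + (if y = y2 \<and> z = z0 then be else 0)) = sb z" .
next
  fix z assume z: "z \<in> Z"
  have "(\<Sum>y\<in>Y. (p' y z + (if y = y1 \<and> z = z0 then al else 0) + (if y = y2 \<and> z = z0 then be else 0)) * xa y)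
    = (\<Sum>y\<in>Y. p' y z * xa y + (if y = y1 then (if z = z0 then al * xa y else 0) else 0) + (if y = y2 then (if z = z0 then be * xa y else 0) else 0))"
    by (rule sum.cong) (auto simp: algebra_simps)
  also have "\<dots> = (\<Sum>y\<in>Y. p' y z * xa y) + (\<Sum>y\<in>Y. (if y = y1 then (if z = z0 then al * xa y else 0) else 0)) + (\<Sum>y\<in>Y. (if y = y2 then (if z = z0 then be * xa y else 0) else 0))"
    by (simp only: sum.distrib)
  also have "\<dots> = (\<Sum>y\<in>Y. p' y z * xa y) + (if z = z0 then al * xa y1 + be * xa y2 else 0)"
    using y1 y2 fY by (simp add: sum.delta)
  also have "\<dots> = sb z * xb z" using c z ex eb[of z] unfolding coup_def by (auto simp: algebra_simps)
  finally show "(\<Sum>y\<in>Y. (p' y z + (if y = y1 \<and> z = z0 then al else 0) + (if y = y2 \<and> z = z0 then be else 0)) * xa y) = sb z * xb z" .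
qed

lemma card_less2:
  assumes "finite Y" "finite Z" "\<forall>y. sa' y \<le> sa y" "\<forall>z. sb' z \<le> sb z"
    and "(\<exists>w\<in>Y. 0 < sa w \<and> \<not> 0 < sa' w) \<or> (\<exists>w\<in>Z. 0 < sb w \<and> \<not> 0 < sb' w)"
  shows "card {y\<in>Y. 0 < (sa'::'a\<Rightarrow>real) y} + card {z\<in>Z. 0 < (sb'::'b\<Rightarrow>real) z}
       < card {y\<in>Y. 0 < sa y} + card {z\<in>Z. 0 < sb z}"
proof -
  have s1: "{y\<in>Y. 0 < sa' y} \<subseteq> {y\<in>Y. 0 < sa y}" using assms(3) by (auto intro: less_le_trans)
  have s2: "{z\<in>Z. 0 < sb' z} \<subseteq> {z\<in>Z. 0 < sb z}" using assms(4) by (auto intro: less_le_trans)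
  have f1: "finite {y\<in>Y. 0 < sa y}" "finite {z\<in>Z. 0 < sb z}" using assms(1,2) by auto
  from assms(5) show ?thesis
  proof
    assume "\<exists>w\<in>Y. 0 < sa w \<and> \<not> 0 < sa' w"
    then have "{y\<in>Y. 0 < sa' y} \<subset> {y\<in>Y. 0 < sa y}" using s1 by auto
    then have "card {y\<in>Y. 0 < sa' y} < card {y\<in>Y. 0 < sa y}" using f1 by (intro psubset_card_mono) auto
    moreover have "card {z\<in>Z. 0 < sb' z} \<le> card {z\<in>Z. 0 < sb z}" using f1 s2 by (intro card_mono) auto
    ultimately show ?thesis by simp
  next
    assume "\<exists>w\<in>Z. 0 < sb w \<and> \<not> 0 < sb' w"
    then have "{z\<in>Z. 0 < sb' z} \<subset> {z\<in>Z. 0 < sb z}" using s2 by auto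
    then have "card {z\<in>Z. 0 < sb' z} < card {z\<in>Z. 0 < sb z}" using f1 by (intro psubset_card_mono) auto
    moreover have "card {y\<in>Y. 0 < sa' y} \<le> card {y\<in>Y. 0 < sa y}" using f1 s1 by (intro card_mono) auto
    ultimately show ?thesis by simp
  qed
qed

lemma core:
  fixes xa :: "'a \<Rightarrow> real" and xb :: "'b \<Rightarrow> real"
  assumes fY: "finite Y" and fZ: "finite Z"
  shows "(\<forall>y. 0 \<le> sa y) \<Longrightarrow> (\<forall>z. 0 \<le> sb z) \<Longrightarrow> (\<Sum>y\<in>Y. sa y) = (\<Sum>z\<in>Z. sb z)
    \<Longrightarrow> (\<Sum>y\<in>Y. sa y * xa y) = (\<Sum>z\<in>Z. sb z * xb z)
    \<Longrightarrow> (\<forall>l. RS Z sb xb l \<le> RS Y sa xa l)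
    \<Longrightarrow> \<exists>p. coup Y Z xa xb sa sb p"
proof (induction "card {y\<in>Y. 0 < sa y} + card {z\<in>Z. 0 < sb z}" arbitrary: sa sb rule: less_induct)
  case (less sa sb)
  note nnA = less.prems(1) and nnB = less.prems(2) and mass = less.prems(3) and mean = less.prems(4)
    and ramp = less.prems(5)
  note IH = less.hyps
  show ?case
  proof (cases "\<exists>z\<in>Z. 0 < sb z")
    case False
    then have b0: "\<forall>z\<in>Z. sb z = 0" using nnB by (metis order_le_less)
    then have "(\<Sum>y\<in>Y. sa y) = 0" using mass by simp
    then have a0: "\<forall>y\<in>Y. sa y = 0" using fY nnA by (simp add: sum_nonneg_eq_0_iff)
    have "coup Y Z xa xb sa sb (\<lambda>y z. 0)" unfolding coup_def using a0 b0 by simp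
    then show ?thesis by blast
  next
    case True
    then obtain z0 where z0: "z0 \<in> Z" "0 < sb z0" by blast
    define x where "x = xb z0"
    show ?thesis
    proof (cases "\<exists>y0\<in>Y. 0 < sa y0 \<and> xa y0 = x")
      case True
      then obtain y0 where y0: "y0 \<in> Y" "0 < sa y0" "xa y0 = x" by blast
      define m where "m = min (sa y0) (sb z0)"
      define sa' where "sa' = (\<lambda>y. sa y - (if y = y0 then m else 0))"
      define sb' where "sb' = (\<lambda>z. sb z - (if z = z0 then m else 0))"
      have m0: "0 \<le> m" using y0 z0 unfolding m_def by simp
      have nnA': "\<forall>y. 0 \<le> sa' y" using nnA unfolding sa'_def m_def by auto
      have nnB': "\<forall>z. 0 \<le> sb' z" using nnB unfolding sb'_def m_def by auto
      have mass': "(\<Sum>y\<in>Y. sa' y) = (\<Sum>z\<in>Z. sb' z)"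
        using sum_upd1[OF fY y0(1), of sa m "\<lambda>_. 1"] sum_upd1[OF fZ z0(1), of sb m "\<lambda>_. 1"] mass
        unfolding sa'_def sb'_def by simp
      have mean': "(\<Sum>y\<in>Y. sa' y * xa y) = (\<Sum>z\<in>Z. sb' z * xb z)"
        using sum_upd1[OF fY y0(1), of sa m xa] sum_upd1[OF fZ z0(1), of sb m xb] mean y0(3)
        unfolding sa'_def sb'_def x_def by simp
      have ramp': "\<forall>l. RS Z sb' xb l \<le> RS Y sa' xa l"
        using ramp y0(3) unfolding sa'_def sb'_def RS_upd1[OF fY y0(1)] RS_upd1[OF fZ z0(1)] x_def
        by (simp add: algebra_simps)
      have lt: "card {y\<in>Y. 0 < sa' y} + card {z\<in>Z. 0 < sb' z} < card {y\<in>Y. 0 < sa y} + card {z\<in>Z. 0 < sb z}"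
      proof (rule card_less2[OF fY fZ])
        show "\<forall>y. sa' y \<le> sa y" "\<forall>z. sb' z \<le> sb z" using m0 unfolding sa'_def sb'_def by auto
        show "(\<exists>w\<in>Y. 0 < sa w \<and> \<not> 0 < sa' w) \<or> (\<exists>w\<in>Z. 0 < sb w \<and> \<not> 0 < sb' w)"
          using y0 z0 unfolding sa'_def sb'_def m_def by (cases "sa y0 \<le> sb z0") auto
      qed
      obtain p' where p': "coup Y Z xa xb sa' sb' p'"
        using IH[OF lt nnA' nnB' mass' mean' ramp'] by blast
      have "coup Y Z xa xb sa sb (\<lambda>y z. p' y z + (if y = y0 \<and> z = z0 then m else 0) + (if y = y0 \<and> z = z0 then 0 else 0))"
        by (rule coup_add[OF fY fZ y0(1) y0(1) z0(1) m0 order_refl p'])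
           (auto simp: sa'_def sb'_def y0(3) x_def)
      then show ?thesis by blast
    next
      case False
      note noA = False
      define P where "P = {y\<in>Y. 0 < sa y}"
      have fP: "finite P" using fY unfolding P_def by simp
      have Pne: "P \<noteq> {}"
      proof
        assume "P = {}"
        then have "\<forall>y\<in>Y. sa y = 0" using nnA unfolding P_def by (auto simp: order_le_less)
        then have "(\<Sum>z\<in>Z. sb z) = 0" using mass by simp
        moreover have "sb z0 \<le> (\<Sum>z\<in>Z. sb z)" using fZ z0 nnB by (intro member_le_sum) auto
        ultimately show False using z0 by simp
      qed
      define A1 where "A1 = {y\<in>Y. 0 < sa y \<and> xa y < x}"
      define A2 where "A2 = {y\<in>Y. 0 < sa y \<and> x < xa y}"
      have fA: "finite A1" "finite A2" using fY unfolding A1_def A2_def by auto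
      have A2ne: "A2 \<noteq> {}"
      proof
        assume A2e: "A2 = {}"
        define l where "l = Max (xa ` P)"
        have lP: "l \<in> xa ` P" unfolding l_def using fP Pne by (intro Max_in) auto
        have leP: "\<forall>y\<in>P. xa y \<le> l" unfolding l_def using fP by auto
        have ltx: "\<forall>y\<in>P. xa y < x" using A2e noA unfolding A2_def P_def by force
        then have "l < x" using lP by auto
        have "RS Y sa xa l = 0" unfolding RS_def
        proof (rule sum.neutral, rule ballI)
          fix y assume "y \<in> Y"
          show "sa y * max 0 (xa y - l) = 0"
          proof (cases "0 < sa y")
            case True then have "xa y \<le> l" using leP \<open>y \<in> Y\<close> unfolding P_def by auto
            then show ?thesis by simp
          next
            case False then show ?thesis using nnA by (metis order_le_less mult_zero_left)
          qed
        qed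
        moreover have "sb z0 * max 0 (xb z0 - l) \<le> RS Z sb xb l" unfolding RS_def
          using fZ z0 nnB by (intro member_le_sum) auto
        moreover have "0 < sb z0 * max 0 (xb z0 - l)" using z0 \<open>l < x\<close> unfolding x_def by simp
        ultimately show False using ramp by (metis not_le less_le_trans)
      qed
      have A1ne: "A1 \<noteq> {}"
      proof
        assume A1e: "A1 = {}"
        define l where "l = Min (xa ` P)"
        have lP: "l \<in> xa ` P" unfolding l_def using fP Pne by (intro Min_in) auto
        have leP: "\<forall>y\<in>P. l \<le> xa y" unfolding l_def using fP by auto
        have ltx: "\<forall>y\<in>P. x < xa y" using A1e noA unfolding A1_def P_def by force
        then have "x < l" using lP by auto
        have "RS Y sa xa l = (\<Sum>y\<in>Y. sa y * xa y - l * sa y)" unfolding RS_def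
        proof (rule sum.cong[OF refl])
          fix y assume "y \<in> Y"
          show "sa y * max 0 (xa y - l) = sa y * xa y - l * sa y"
          proof (cases "0 < sa y")
            case True then have "l \<le> xa y" using leP \<open>y \<in> Y\<close> unfolding P_def by auto
            then show ?thesis by (simp add: algebra_simps)
          next
            case False then have "sa y = 0" using nnA by (metis order_le_less)
            then show ?thesis by simp
          qed
        qed
        also have "\<dots> = (\<Sum>y\<in>Y. sa y * xa y) - l * (\<Sum>y\<in>Y. sa y)" by (simp add: sum_subtractf sum_distrib_left)
        finally have RA: "RS Y sa xa l = (\<Sum>z\<in>Z. sb z * xb z) - l * (\<Sum>z\<in>Z. sb z)" using mass mean by simp
        have "(\<Sum>z\<in>Z. sb z * xb z - l * sb z + (if z = z0 then sb z0 * (l - x) else 0)) \<le> RS Z sb xb l"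
          unfolding RS_def
        proof (rule sum_mono)
          fix z assume "z \<in> Z"
          show "sb z * xb z - l * sb z + (if z = z0 then sb z0 * (l - x) else 0) \<le> sb z * max 0 (xb z - l)"
          proof (cases "z = z0")
            case True then show ?thesis using \<open>x < l\<close> unfolding x_def by (simp add: algebra_simps)
          next
            case False
            have "sb z * (xb z - l) \<le> sb z * max 0 (xb z - l)" using nnB by (intro mult_left_mono) auto
            then show ?thesis using False by (simp add: algebra_simps)
          qed
        qed
        also have "(\<Sum>z\<in>Z. sb z * xb z - l * sb z + (if z = z0 then sb z0 * (l - x) else 0))
            = (\<Sum>z\<in>Z. sb z * xb z) - l * (\<Sum>z\<in>Z. sb z) + sb z0 * (l - x)"
          using fZ z0 by (simp add: sum.distrib sum_subtractf sum_distrib_left)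
        finally have "RS Y sa xa l + sb z0 * (l - x) \<le> RS Z sb xb l" using RA by simp
        moreover have "0 < sb z0 * (l - x)" using z0 \<open>x < l\<close> by simp
        ultimately show False using ramp by (metis add.commute add_less_same_cancel2 not_le leD order.strict_trans2 less_add_same_cancel1)
      qed
      have "Max (xa ` A1) \<in> xa ` A1" using fA A1ne by (intro Max_in) auto
      then obtain y1 where y1: "y1 \<in> A1" "xa y1 = Max (xa ` A1)" by (metis imageE)
      have "Min (xa ` A2) \<in> xa ` A2" using fA A2ne by (intro Min_in) auto
      then obtain y2 where y2: "y2 \<in> A2" "xa y2 = Min (xa ` A2)" by (metis imageE)
      define x1 where "x1 = xa y1"
      define x2 where "x2 = xa y2"
      have y1Y: "y1 \<in> Y" "0 < sa y1" "x1 < x" using y1 unfolding A1_def x1_def by auto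
      have y2Y: "y2 \<in> Y" "0 < sa y2" "x < x2" using y2 unfolding A2_def x2_def by auto
      have sep: "\<forall>y\<in>Y. 0 < sa y \<longrightarrow> xa y \<le> x1 \<or> x2 \<le> xa y"
      proof (intro ballI impI)
        fix y assume y: "y \<in> Y" "0 < sa y"
        then have "xa y \<noteq> x" using noA by auto
        then consider "xa y < x" | "x < xa y" by linarith
        then show "xa y \<le> x1 \<or> x2 \<le> xa y"
        proof cases
          case 1 then have "y \<in> A1" using y unfolding A1_def by auto
          then show ?thesis using fA y1 unfolding x1_def by auto
        next
          case 2 then have "y \<in> A2" using y unfolding A2_def by auto
          then show ?thesis using fA y2 unfolding x2_def by auto
        qed
      qed
      have dpos: "0 < x2 - x1" using y1Y y2Y by simp
      have y12: "y1 \<noteq> y2" using y1Y y2Y unfolding x1_def x2_def by auto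
      define lim1 where "lim1 = sa y1 * (x2 - x1) / (x2 - x)"
      define lim2 where "lim2 = sa y2 * (x2 - x1) / (x - x1)"
      define m where "m = min (sb z0) (min lim1 lim2)"
      define AL where "AL = (\<lambda>m::real. m*(x2-x)/(x2-x1))"
      define BE where "BE = (\<lambda>m::real. m*(x-x1)/(x2-x1))"
      define SA where "SA = (\<lambda>m y. sa y - (if y = y1 then AL m else 0) - (if y = y2 then BE m else 0))"
      define SB where "SB = (\<lambda>m z. sb z - (if z = z0 then m else 0))"
      have lim1p: "0 < lim1" unfolding lim1_def using y1Y y2Y by simp
      have lim2p: "0 < lim2" unfolding lim2_def using y1Y y2Y by simp
      have m0: "0 < m" unfolding m_def using lim1p lim2p z0 by simp
      have ALmono: "AL m' \<le> sa y1" if "m' \<le> m" "0 \<le> m'" for m'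
      proof -
        have "m' \<le> lim1" using that unfolding m_def by simp
        then have "m' * (x2 - x) \<le> sa y1 * (x2 - x1)" unfolding lim1_def using y2Y by (simp add: field_simps)
        then show ?thesis unfolding AL_def using dpos by (simp add: field_simps)
      qed
      have BEmono: "BE m' \<le> sa y2" if "m' \<le> m" "0 \<le> m'" for m'
      proof -
        have "m' \<le> lim2" using that unfolding m_def by simp
        then have "m' * (x - x1) \<le> sa y2 * (x2 - x1)" unfolding lim2_def using y1Y by (simp add: field_simps)
        then show ?thesis unfolding BE_def using dpos by (simp add: field_simps)
      qed
      have ALp: "0 \<le> AL m'" "0 \<le> BE m'" if "0 \<le> m'" for m'
        unfolding AL_def BE_def using that dpos y1Y y2Y by auto
      have ABsum: "AL m' + BE m' = m'" for m'
      proof -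
        have "AL m' + BE m' = (m'*(x2-x) + m'*(x-x1))/(x2-x1)" unfolding AL_def BE_def by (simp add: add_divide_distrib)
        also have "\<dots> = m'*(x2-x1)/(x2-x1)" by (simp add: algebra_simps)
        also have "\<dots> = m'" using dpos by simp
        finally show ?thesis .
      qed
      have ABmean: "AL m' * x1 + BE m' * x2 = m' * x" for m'
      proof -
        have ha: "AL m' * (x2-x1) = m'*(x2-x)" unfolding AL_def using dpos by simp
        have hb: "BE m' * (x2-x1) = m'*(x-x1)" unfolding BE_def using dpos by simp
        have "(x2 - x1) * (AL m' * x1 + BE m' * x2) = (AL m' * (x2-x1)) * x1 + (BE m' * (x2-x1)) * x2"
          by (simp add: algebra_simps)
        also have "\<dots> = (x2 - x1) * (m' * x)" unfolding ha hb by (simp add: algebra_simps)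
        finally have "(x2 - x1) * (AL m' * x1 + BE m' * x2) = (x2 - x1) * (m' * x)" .
        then show ?thesis using dpos by simp
      qed
      have nnSA: "\<forall>y. 0 \<le> SA m' y" if "m' \<le> m" "0 \<le> m'" for m'
        using nnA ALmono[OF that] BEmono[OF that] y12 unfolding SA_def by auto
      have nnSB: "\<forall>z. 0 \<le> SB m' z" if "m' \<le> m" for m'
        using nnB that unfolding SB_def m_def by auto
      have sepSA: "\<forall>y\<in>Y. 0 < SA m' y \<longrightarrow> xa y \<le> x1 \<or> x2 \<le> xa y" if "0 \<le> m'" for m'
        using sep ALp[OF that] unfolding SA_def by (auto split: if_splits)
      have rampSA: "\<forall>l. RS Z (SB m') xb l \<le> RS Y (SA m') xa l"
        if "0 \<le> m'" "m'*(x-x1)*(x2-x)/(x2-x1) \<le> RS Y sa xa x - RS Z sb xb x" for m'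
        unfolding SA_def SB_def AL_def BE_def
        using fusion_ok[OF nnA nnB ramp sep fY fZ z0(1) x_def[symmetric] y1Y(1) x1_def[symmetric]
            y2Y(1) x2_def[symmetric] y1Y(3) y2Y(3) that] by blast
      have slack: "m*(x-x1)*(x2-x)/(x2-x1) \<le> RS Y sa xa x - RS Z sb xb x"
      proof (rule ccontr)
        assume H: "\<not> ?thesis"
        define Dx where "Dx = RS Y sa xa x - RS Z sb xb x"
        have Dx0: "0 \<le> Dx" using ramp unfolding Dx_def by (simp add: algebra_simps)
        define m2 where "m2 = Dx * (x2 - x1) / ((x - x1) * (x2 - x))"
        have pp: "0 < (x - x1) * (x2 - x)" using y1Y y2Y by simp
        have m2q: "m2 * ((x - x1) * (x2 - x)) = Dx * (x2 - x1)" unfolding m2_def using pp y1Y(3) y2Y(3) by simp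
        have m2e: "m2*(x-x1)*(x2-x)/(x2-x1) = Dx"
        proof -
          have "m2*(x-x1)*(x2-x)/(x2-x1) = (m2 * ((x - x1) * (x2 - x)))/(x2-x1)" by (simp add: mult.assoc)
          also have "\<dots> = Dx" unfolding m2q using dpos by simp
          finally show ?thesis .
        qed
        have m20: "0 \<le> m2" unfolding m2_def using Dx0 pp dpos by simp
        have "m2 * ((x-x1)*(x2-x)/(x2-x1)) < m * ((x-x1)*(x2-x)/(x2-x1))" using H m2e unfolding Dx_def by (simp add: algebra_simps)
        moreover have qp: "0 < (x-x1)*(x2-x)/(x2-x1)" using pp dpos by simp
        ultimately have m2m: "m2 < m" using mult_less_cancel_right_pos[OF qp] by blast
        have r2: "\<forall>l. RS Z (SB m2) xb l \<le> RS Y (SA m2) xa l"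
          by (rule rampSA[OF m20]) (simp add: m2e Dx_def)
        have "RS Z (SB m2) xb x < RS Y (SA m2) xa x"
        proof (rule kink[OF nnSA[OF _ m20] nnSB r2 sepSA[OF m20] fZ z0(1) x_def[symmetric] y1Y(3) y2Y(3)])
          show "m2 \<le> m" "m2 \<le> m" using m2m by auto
          show "0 < SB m2 z0" unfolding SB_def using m2m unfolding m_def by auto
        qed
        moreover have "RS Z (SB m2) xb x = RS Z sb xb x"
          unfolding SB_def RS_upd1[OF fZ z0(1)] x_def by simp
        moreover have "RS Y (SA m2) xa x = RS Y sa xa x - BE m2 * (x2 - x)"
          unfolding SA_def RS_upd2[OF fY y1Y(1) y2Y(1)] x1_def[symmetric] x2_def[symmetric]
          using y1Y y2Y by simp
        moreover have "BE m2 * (x2 - x) = Dx" using m2e unfolding BE_def by (simp add: algebra_simps)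
        ultimately show False unfolding Dx_def by simp
      qed
      have m0': "0 \<le> m" using m0 by simp
      have ramp': "\<forall>l. RS Z (SB m) xb l \<le> RS Y (SA m) xa l" by (rule rampSA[OF m0' slack])
      have mass': "(\<Sum>y\<in>Y. SA m y) = (\<Sum>z\<in>Z. SB m z)"
        using sum_upd2[OF fY y1Y(1) y2Y(1), of sa "AL m" "BE m" "\<lambda>_. 1"] sum_upd1[OF fZ z0(1), of sb m "\<lambda>_. 1"]
          mass ABsum[of m] unfolding SA_def SB_def by simp
      have mean': "(\<Sum>y\<in>Y. SA m y * xa y) = (\<Sum>z\<in>Z. SB m z * xb z)"
        using sum_upd2[OF fY y1Y(1) y2Y(1), of sa "AL m" "BE m" xa] sum_upd1[OF fZ z0(1), of sb m xb]
          mean ABmean[of m] unfolding SA_def SB_def x_def x1_def x2_def by simp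
      have lt: "card {y\<in>Y. 0 < SA m y} + card {z\<in>Z. 0 < SB m z} < card {y\<in>Y. 0 < sa y} + card {z\<in>Z. 0 < sb z}"
      proof (rule card_less2[OF fY fZ])
        show "\<forall>y. SA m y \<le> sa y" using ALp[OF m0'] unfolding SA_def by auto
        show "\<forall>z. SB m z \<le> sb z" using m0' unfolding SB_def by auto
        consider "m = sb z0" | "m = lim1" | "m = lim2" unfolding m_def by linarith
        then show "(\<exists>w\<in>Y. 0 < sa w \<and> \<not> 0 < SA m w) \<or> (\<exists>w\<in>Z. 0 < sb w \<and> \<not> 0 < SB m w)"
        proof cases
          case 1 then show ?thesis using z0 unfolding SB_def by auto
        next
          case 2
          have e: "lim1 * (x2 - x) = sa y1 * (x2 - x1)" unfolding lim1_def using y2Y by simp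
          have "AL m = sa y1" unfolding AL_def 2 e using dpos by simp
          then have "SA m y1 = 0" unfolding SA_def using y12 by simp
          then show ?thesis using y1Y by auto
        next
          case 3
          have e: "lim2 * (x - x1) = sa y2 * (x2 - x1)" unfolding lim2_def using y1Y by simp
          have "BE m = sa y2" unfolding BE_def 3 e using dpos by simp
          then have "SA m y2 = 0" unfolding SA_def using y12 by simp
          then show ?thesis using y2Y by auto
        qed
      qed
      obtain p' where p': "coup Y Z xa xb (SA m) (SB m) p'"
        using IH[OF lt nnSA[OF order_refl m0'] nnSB[OF order_refl] mass' mean' ramp'] by blast
      have "coup Y Z xa xb sa sb (\<lambda>y z. p' y z + (if y = y1 \<and> z = z0 then AL m else 0) + (if y = y2 \<and> z = z0 then BE m else 0))"
      proof (rule coup_add[OF fY fZ y1Y(1) y2Y(1) z0(1) ALp[OF m0'] p'])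
        show "sa y = SA m y + (if y = y1 then AL m else 0) + (if y = y2 then BE m else 0)" for y
          unfolding SA_def by simp
        show "sb z = SB m z + (if z = z0 then AL m + BE m else 0)" for z
          unfolding SB_def ABsum by simp
        show "AL m * xa y1 + BE m * xa y2 = (AL m + BE m) * xb z0"
          using ABmean[of m] ABsum[of m] unfolding x1_def x2_def x_def by simp
      qed
      then show ?thesis by blast
    qed
  qed
qed



definition H :: "chan \<Rightarrow> real \<Rightarrow> real" where
  "H C l = (\<Sum>y\<in>fst C. max 0 (snd C True y - l * (snd C False y + snd C True y)))"

lemma chanD:
  assumes "is_chan C"
  shows "finite (fst C)" "\<And>x y. 0 \<le> snd C x y" "\<And>x. (\<Sum>y\<in>fst C. snd C x y) = 1"
    "\<And>x y. y \<notin> fst C \<Longrightarrow> snd C x y = 0"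
  using assms unfolding is_chan_def by auto

lemma chan_ne: "is_chan C \<Longrightarrow> fst C \<noteq> {}"
  using chanD(3)[of C True] by auto

lemma max0_sum_le:
  fixes g :: "'a \<Rightarrow> real"
  assumes "\<forall>y\<in>S. 0 \<le> c y"
  shows "max 0 (\<Sum>y\<in>S. c y * g y) \<le> (\<Sum>y\<in>S. c y * max 0 (g y))"
proof (rule max.boundedI)
  show "0 \<le> (\<Sum>y\<in>S. c y * max 0 (g y))" using assms by (intro sum_nonneg) auto
  show "(\<Sum>y\<in>S. c y * g y) \<le> (\<Sum>y\<in>S. c y * max 0 (g y))"
    using assms by (intro sum_mono mult_left_mono) auto
qed

lemma H_mono:
  assumes "refines A B"
  shows "H B l \<le> H A l"
proof -
  from assms obtain W where cA: "is_chan A" and cB: "is_chan B"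
    and W0: "\<forall>y\<in>fst A. \<forall>z\<in>fst B. 0 \<le> W y z"
    and W1: "\<forall>y\<in>fst A. (\<Sum>z\<in>fst B. W y z) = 1"
    and WE: "\<forall>x. \<forall>z\<in>fst B. (\<Sum>y\<in>fst A. snd A x y * W y z) = snd B x z"
    unfolding refines_def by blast
  define g where "g y = snd A True y - l * (snd A False y + snd A True y)" for y
  have "H B l = (\<Sum>z\<in>fst B. max 0 (\<Sum>y\<in>fst A. W y z * g y))"
    unfolding H_def
  proof (rule sum.cong[OF refl])
    fix z assume z: "z \<in> fst B"
    have "(\<Sum>y\<in>fst A. W y z * g y) = (\<Sum>y\<in>fst A. snd A True y * W y z) - l * ((\<Sum>y\<in>fst A. snd A False y * W y z) + (\<Sum>y\<in>fst A. snd A True y * W y z))"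
      unfolding g_def by (simp add: sum_subtractf sum_distrib_left sum.distrib algebra_simps)
    then show "max 0 (snd B True z - l * (snd B False z + snd B True z)) = max 0 (\<Sum>y\<in>fst A. W y z * g y)"
      using WE z by simp
  qed
  also have "\<dots> \<le> (\<Sum>z\<in>fst B. \<Sum>y\<in>fst A. W y z * max 0 (g y))"
    using W0 by (intro sum_mono max0_sum_le) auto
  also have "\<dots> = (\<Sum>y\<in>fst A. (\<Sum>z\<in>fst B. W y z) * max 0 (g y))"
    by (subst sum.swap) (simp add: sum_distrib_right)
  also have "\<dots> = H A l" unfolding H_def g_def using W1 by simp
  finally show ?thesis .
qed

lemma H_ge1:
  assumes "is_chan C" "1 \<le> l"
  shows "H C l = 0"
  unfolding H_def
proof (rule sum.neutral, rule ballI)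
  fix y assume "y \<in> fst C"
  have "snd C True y - l * (snd C False y + snd C True y) \<le> 0"
  proof -
    have "snd C True y \<le> l * snd C True y" using mult_right_mono[OF assms(2) chanD(2)[OF assms(1), of True y]] by simp
    moreover have "0 \<le> l * snd C False y" using assms chanD(2)[OF assms(1)] by simp
    ultimately show ?thesis by (simp add: algebra_simps)
  qed
  then show "max 0 (snd C True y - l * (snd C False y + snd C True y)) = 0" by simp
qed

lemma H_le0:
  assumes "is_chan C" "l \<le> 0"
  shows "H C l = 1 - 2 * l"
proof -
  have "H C l = (\<Sum>y\<in>fst C. snd C True y - l * (snd C False y + snd C True y))"
    unfolding H_def
  proof (rule sum.cong[OF refl])
    fix y assume "y \<in> fst C"
    have "0 \<le> - l * (snd C False y + snd C True y)" using assms chanD(2)[OF assms(1), of False y] chanD(2)[OF assms(1), of True y]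
      by (intro mult_nonneg_nonneg) auto
    then have "0 \<le> snd C True y - l * (snd C False y + snd C True y)" using chanD(2)[OF assms(1), of True y] by simp
    then show "max 0 (snd C True y - l * (snd C False y + snd C True y)) = snd C True y - l * (snd C False y + snd C True y)" by simp
  qed
  also have "\<dots> = 1 - 2 * l" using chanD(3)[OF assms(1)] by (simp add: sum_subtractf sum_distrib_left[symmetric] sum.distrib)
  finally show ?thesis .
qed

lemma H_nonneg: "0 \<le> H C l" unfolding H_def by (intro sum_nonneg) auto

lemma H_swap:
  assumes "is_chan C"
  shows "(\<Sum>y\<in>fst C. max 0 (snd C False y - l * (snd C False y + snd C True y))) = H C (1 - l) + 1 - 2 * l"
proof -
  have "(\<Sum>y\<in>fst C. max 0 (snd C False y - l * (snd C False y + snd C True y)))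
     = (\<Sum>y\<in>fst C. max 0 (snd C True y - (1-l) * (snd C False y + snd C True y)) - (snd C True y - (1-l) * (snd C False y + snd C True y)))"
    by (rule sum.cong) (auto simp: max_def algebra_simps)
  also have "\<dots> = H C (1 - l) - (\<Sum>y\<in>fst C. snd C True y - (1-l) * (snd C False y + snd C True y))"
    unfolding H_def by (simp add: sum_subtractf)
  also have "(\<Sum>y\<in>fst C. snd C True y - (1-l) * (snd C False y + snd C True y)) = 1 - 2 * (1 - l)"
    using chanD(3)[OF assms] by (simp add: sum_subtractf sum_distrib_left[symmetric] sum.distrib)
  finally show ?thesis by simp
qed

text \<open>Blackwell for dichotomies.\<close>

definition sm :: "chan \<Rightarrow> nat \<Rightarrow> real" where
  "sm C y = snd C False y + snd C True y"
definition ps :: "chan \<Rightarrow> nat \<Rightarrow> real" where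
  "ps C y = (if sm C y = 0 then 0 else snd C True y / sm C y)"

lemma sm_nonneg: "is_chan C \<Longrightarrow> 0 \<le> sm C y"
  unfolding sm_def using chanD(2) by (simp add: add_nonneg_nonneg)

lemma sm_ps: "is_chan C \<Longrightarrow> sm C y * ps C y = snd C True y"
  unfolding ps_def sm_def using chanD(2)[of C] by (auto simp: add_nonneg_eq_0_iff)

lemma RS_H: "is_chan C \<Longrightarrow> RS (fst C) (sm C) (ps C) l = H C l"
  unfolding RS_def H_def
proof (rule sum.cong[OF refl])
  fix y assume C: "is_chan C"
  show "sm C y * max 0 (ps C y - l) = max 0 (snd C True y - l * (snd C False y + snd C True y))"
  proof (cases "sm C y = 0")
    case True
    then have "snd C True y = 0" "snd C False y = 0" using chanD(2)[OF C] unfolding sm_def by (auto simp: add_nonneg_eq_0_iff)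
    then show ?thesis using True by simp
  next
    case False
    then have p: "0 < sm C y" using sm_nonneg[OF C, of y] by linarith
    have "sm C y * max 0 (ps C y - l) = max 0 (sm C y * (ps C y - l))" using p by (simp add: max_mult_distrib_left)
    also have "sm C y * (ps C y - l) = snd C True y - l * (snd C False y + snd C True y)"
      using sm_ps[OF C, of y] unfolding sm_def by (simp add: algebra_simps)
    finally show ?thesis .
  qed
qed

lemma BL:
  assumes cA: "is_chan A" and cB: "is_chan B" and HH: "\<forall>l. H B l \<le> H A l"
  shows "refines A B"
proof -
  have fA: "finite (fst A)" and fB: "finite (fst B)" using chanD cA cB by auto
  have mA: "(\<Sum>y\<in>fst A. sm A y) = 2" using chanD(3)[OF cA] unfolding sm_def by (simp add: sum.distrib)
  have mB: "(\<Sum>y\<in>fst B. sm B y) = 2" using chanD(3)[OF cB] unfolding sm_def by (simp add: sum.distrib)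
  have eA: "(\<Sum>y\<in>fst A. sm A y * ps A y) = 1" using chanD(3)[OF cA] sm_ps[OF cA] by simp
  have eB: "(\<Sum>y\<in>fst B. sm B y * ps B y) = 1" using chanD(3)[OF cB] sm_ps[OF cB] by simp
  obtain p where p: "coup (fst A) (fst B) (ps A) (ps B) (sm A) (sm B) p"
    using core[OF fA fB, of "sm A" "sm B" "ps A" "ps B"] sm_nonneg[OF cA] sm_nonneg[OF cB] mA mB eA eB HH
      RS_H[OF cA] RS_H[OF cB] by auto
  from p have p0: "\<forall>y z. 0 \<le> p y z" and pA: "\<forall>y\<in>fst A. (\<Sum>z\<in>fst B. p y z) = sm A y"
    and pB: "\<forall>z\<in>fst B. (\<Sum>y\<in>fst A. p y z) = sm B z"
    and pX: "\<forall>z\<in>fst B. (\<Sum>y\<in>fst A. p y z * ps A y) = sm B z * ps B z"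
    unfolding coup_def by auto
  obtain z0 where z0: "z0 \<in> fst B" using chan_ne[OF cB] by auto
  define W where "W y z = (if sm A y = 0 then (if z = z0 then 1 else 0) else p y z / sm A y)" for y z
  have pz: "p y z = 0" if "y \<in> fst A" "z \<in> fst B" "sm A y = 0" for y z
  proof -
    have "(\<Sum>z\<in>fst B. p y z) = 0" using pA that by simp
    then show ?thesis using fB p0 that by (simp add: sum_nonneg_eq_0_iff)
  qed
  have keyT: "snd A True y * W y z = p y z * ps A y" if "y \<in> fst A" "z \<in> fst B" for y z
  proof (cases "sm A y = 0")
    case True
    then have "snd A True y = 0" using chanD(2)[OF cA] unfolding sm_def by (auto simp: add_nonneg_eq_0_iff)
    then show ?thesis using pz[OF that True] by simp
  next
    case False
    then show ?thesis unfolding W_def ps_def using False by simp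
  qed
  have keyF: "snd A False y * W y z = p y z - p y z * ps A y" if "y \<in> fst A" "z \<in> fst B" for y z
  proof (cases "sm A y = 0")
    case True
    then have "snd A False y = 0" using chanD(2)[OF cA] unfolding sm_def by (auto simp: add_nonneg_eq_0_iff)
    then show ?thesis using pz[OF that True] by simp
  next
    case False
    have "p y z - p y z * ps A y = p y z * (sm A y - snd A True y) / sm A y" unfolding ps_def using False by (simp add: field_simps)
    also have "sm A y - snd A True y = snd A False y" unfolding sm_def by simp
    finally show ?thesis unfolding W_def using False by simp
  qed
  show ?thesis unfolding refines_def
  proof (intro conjI cA cB exI[of _ W] ballI allI)
    fix y z assume "y \<in> fst A" "z \<in> fst B"
    then show "0 \<le> W y z" unfolding W_def using p0 sm_nonneg[OF cA, of y] by auto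
  next
    fix y assume y: "y \<in> fst A"
    show "(\<Sum>z\<in>fst B. W y z) = 1"
    proof (cases "sm A y = 0")
      case True then show ?thesis unfolding W_def using fB z0 by simp
    next
      case False
      have "(\<Sum>z\<in>fst B. W y z) = (\<Sum>z\<in>fst B. p y z) / sm A y" unfolding W_def using False by (simp add: sum_divide_distrib)
      then show ?thesis using pA y False by simp
    qed
  next
    fix x z assume z: "z \<in> fst B"
    show "(\<Sum>y\<in>fst A. snd A x y * W y z) = snd B x z"
    proof (cases x)
      case True
      have "(\<Sum>y\<in>fst A. snd A True y * W y z) = (\<Sum>y\<in>fst A. p y z * ps A y)"
        using keyT z by (intro sum.cong) auto
      also have "\<dots> = snd B True z" using pX z sm_ps[OF cB] by simp
      finally show ?thesis using True by simp
    next
      case False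
      have "(\<Sum>y\<in>fst A. snd A False y * W y z) = (\<Sum>y\<in>fst A. p y z - p y z * ps A y)"
        using keyF z by (intro sum.cong) auto
      also have "\<dots> = sm B z - sm B z * ps B z" using pX pB z by (simp add: sum_subtractf)
      also have "\<dots> = snd B False z" using sm_ps[OF cB, of z] unfolding sm_def by simp
      finally show ?thesis using False by simp
    qed
  qed
qed

definition rho :: "ereal \<Rightarrow> real" where
  "rho e = (if e = \<infinity> then 0 else 1 / (1 + exp (real_of_ereal e)))"

lemma rho_bounds: "0 \<le> rho e" "rho e \<le> 1"
proof -
  have "0 < 1 + exp (real_of_ereal e)" by (simp add: add_pos_pos)
  then show "0 \<le> rho e" "rho e \<le> 1" unfolding rho_def by (auto simp: divide_le_eq_1)
qed

lemma rr_snd: "snd (rr_chan e) x y = (if y = 0 then (if x then rho e else 1 - rho e)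
   else if y = 1 then (if x then 1 - rho e else rho e) else 0)"
proof -
  have E: "exp (real_of_ereal e) / (1 + exp (real_of_ereal e)) = 1 - 1 / (1 + exp (real_of_ereal e))"
  proof -
    have "0 < 1 + exp (real_of_ereal e)" by (simp add: add_pos_pos)
    then show ?thesis by (simp add: field_simps)
  qed
  show ?thesis unfolding rr_chan_def rho_def using E by auto
qed

lemma rr_fst: "fst (rr_chan e) = {0, 1}" unfolding rr_chan_def by simp

lemma rr_chan: "is_chan (rr_chan e)"
  unfolding is_chan_def rr_fst rr_snd using rho_bounds[of e] by auto

lemma H_rr: "H (rr_chan e) l = max 0 (rho e - l) + max 0 (1 - rho e - l)"
  unfolding H_def rr_fst rr_snd by simp

lemma vchoice_fst: "fst (vchoice K w C) = (\<Union>k<K. (\<lambda>y. prod_encode (k, y)) ` fst (C k))"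
  unfolding vchoice_def by simp

lemma vchoice_snd: "snd (vchoice K w C) x (prod_encode (k, y)) = (if k < K \<and> y \<in> fst (C k) then w k * snd (C k) x y else 0)"
  unfolding vchoice_def by simp

lemma vchoice_sum:
  assumes "\<forall>k<K. finite (fst (C k))"
  shows "(\<Sum>z\<in>fst (vchoice K w C). g z) = (\<Sum>k<K. \<Sum>y\<in>fst (C k). g (prod_encode (k, y)))"
proof -
  have "(\<Sum>z\<in>fst (vchoice K w C). g z) = (\<Sum>k<K. \<Sum>z\<in>(\<lambda>y. prod_encode (k, y)) ` fst (C k). g z)"
    unfolding vchoice_fst
  proof (rule sum.UNION_disjoint)
    show "finite {..<K}" by simp
    show "\<forall>i\<in>{..<K}. finite ((\<lambda>y. prod_encode (i, y)) ` fst (C i))" using assms by auto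
    show "\<forall>i\<in>{..<K}. \<forall>j\<in>{..<K}. i \<noteq> j \<longrightarrow> (\<lambda>y. prod_encode (i, y)) ` fst (C i) \<inter> (\<lambda>y. prod_encode (j, y)) ` fst (C j) = {}"
      by (auto dest: inj_onD[OF inj_prod_encode, of "(_,_)" "(_,_)", simplified])
  qed
  also have "\<dots> = (\<Sum>k<K. \<Sum>y\<in>fst (C k). g (prod_encode (k, y)))"
  proof (rule sum.cong[OF refl])
    fix k
    have "inj_on (\<lambda>y. prod_encode (k, y)) (fst (C k))"
      by (auto intro!: inj_onI dest: inj_onD[OF inj_prod_encode, of "(_,_)" "(_,_)", simplified])
    then show "(\<Sum>z\<in>(\<lambda>y. prod_encode (k, y)) ` fst (C k). g z) = (\<Sum>y\<in>fst (C k). g (prod_encode (k, y)))"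
      by (simp add: sum.reindex)
  qed
  finally show ?thesis .
qed

lemma vchoice_chan:
  assumes C: "\<forall>k<K. is_chan (C k)" and w: "\<forall>k<K. 0 \<le> w k" and ws: "(\<Sum>k<K. w k) = 1"
  shows "is_chan (vchoice K w C)"
proof -
  have fC: "\<forall>k<K. finite (fst (C k))" using C chanD by auto
  show ?thesis unfolding is_chan_def
  proof (intro conjI allI impI)
    show "finite (fst (vchoice K w C))" unfolding vchoice_fst using fC by auto
  next
    fix x z show "0 \<le> snd (vchoice K w C) x z"
      unfolding vchoice_def using C w chanD(2) by (auto split: prod.split)
  next
    fix x
    have "(\<Sum>z\<in>fst (vchoice K w C). snd (vchoice K w C) x z) = (\<Sum>k<K. \<Sum>y\<in>fst (C k). w k * snd (C k) x y)"
      unfolding vchoice_sum[OF fC] vchoice_snd by (intro sum.cong) auto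
    also have "\<dots> = (\<Sum>k<K. w k)" using C chanD(3) by (simp add: sum_distrib_left[symmetric])
    finally show "(\<Sum>z\<in>fst (vchoice K w C). snd (vchoice K w C) x z) = 1" using ws by simp
  next
    fix x z assume z: "z \<notin> fst (vchoice K w C)"
    obtain k y where kz: "prod_decode z = (k, y)" by (cases "prod_decode z") auto
    then have "z = prod_encode (k, y)" by (metis prod_decode_inverse)
    then have "\<not> (k < K \<and> y \<in> fst (C k))" using z unfolding vchoice_fst by auto
    then show "snd (vchoice K w C) x z = 0" unfolding vchoice_def using kz by auto
  qed
qed

lemma H_vchoice:
  assumes C: "\<forall>k<K. is_chan (C k)" and w: "\<forall>k<K. 0 \<le> w k"
  shows "H (vchoice K w C) l = (\<Sum>k<K. w k * H (C k) l)"
proof -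
  have fC: "\<forall>k<K. finite (fst (C k))" using C chanD by auto
  show ?thesis
    unfolding H_def vchoice_sum[OF fC] vchoice_snd
  proof (rule sum.cong[OF refl])
    fix k assume k: "k \<in> {..<K}"
    have "(\<Sum>y\<in>fst (C k). max 0 (w k * snd (C k) True y - l * (w k * snd (C k) False y + w k * snd (C k) True y)))
        = (\<Sum>y\<in>fst (C k). w k * max 0 (snd (C k) True y - l * (snd (C k) False y + snd (C k) True y)))"
    proof (rule sum.cong[OF refl])
      fix y
      have "w k * snd (C k) True y - l * (w k * snd (C k) False y + w k * snd (C k) True y) = w k * (snd (C k) True y - l * (snd (C k) False y + snd (C k) True y))"
        by (simp add: algebra_simps)
      then show "max 0 (w k * snd (C k) True y - l * (w k * snd (C k) False y + w k * snd (C k) True y)) = w k * max 0 (snd (C k) True y - l * (snd (C k) False y + snd (C k) True y))"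
        using w k by (simp add: max_mult_distrib_left)
    qed
    then show "(\<Sum>y\<in>fst (C k). max 0 ((if k < K \<and> y \<in> fst (C k) then w k * snd (C k) True y else 0) - l * ((if k < K \<and> y \<in> fst (C k) then w k * snd (C k) False y else 0) + (if k < K \<and> y \<in> fst (C k) then w k * snd (C k) True y else 0))))
        = w k * (\<Sum>y\<in>fst (C k). max 0 (snd (C k) True y - l * (snd (C k) False y + snd (C k) True y)))"
      using k by (simp add: sum_distrib_left)
  qed
qed



lemma second_diff:
  fixes u t d :: real
  assumes "0 < d" "u = t \<or> d \<le> \<bar>u - t\<bar>"
  shows "max 0 (u - (t - d)) - 2 * max 0 (u - t) + max 0 (u - (t + d)) = (if u = t then d else 0)"
  using assms by (auto simp: max_def abs_if)

lemma kink_unique: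
  fixes s s' u v :: "'a \<Rightarrow> real"
  assumes fZ: "finite Z" and E: "\<forall>l. (\<Sum>z\<in>Z. s z * max 0 (u z - l)) = (\<Sum>z\<in>Z. s' z * max 0 (v z - l))"
  shows "(\<Sum>z\<in>{z\<in>Z. u z = t}. s z) = (\<Sum>z\<in>{z\<in>Z. v z = t}. s' z)"
proof -
  define D where "D = (\<lambda>z. \<bar>u z - t\<bar>) ` {z\<in>Z. u z \<noteq> t} \<union> (\<lambda>z. \<bar>v z - t\<bar>) ` {z\<in>Z. v z \<noteq> t}"
  define d where "d = (if D = {} then 1 else Min D)"
  have fD: "finite D" unfolding D_def using fZ by auto
  have Dpos: "\<forall>e\<in>D. 0 < e" unfolding D_def by auto
  have d0: "0 < d" unfolding d_def using fD Dpos Min_in by auto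
  have du: "u z = t \<or> d \<le> \<bar>u z - t\<bar>" if "z \<in> Z" for z
  proof (cases "u z = t")
    case False
    then have "\<bar>u z - t\<bar> \<in> D" unfolding D_def using that by auto
    then show ?thesis unfolding d_def using fD by auto
  qed simp
  have dv: "v z = t \<or> d \<le> \<bar>v z - t\<bar>" if "z \<in> Z" for z
  proof (cases "v z = t")
    case False
    then have "\<bar>v z - t\<bar> \<in> D" unfolding D_def using that by auto
    then show ?thesis unfolding d_def using fD by auto
  qed simp
  have gen: "(\<Sum>z\<in>Z. r z * max 0 (w z - (t - d))) - 2 * (\<Sum>z\<in>Z. r z * max 0 (w z - t)) + (\<Sum>z\<in>Z. r z * max 0 (w z - (t + d)))
      = d * (\<Sum>z\<in>{z\<in>Z. w z = t}. r z)"
    if W: "\<And>z. z \<in> Z \<Longrightarrow> w z = t \<or> d \<le> \<bar>w z - t\<bar>" for r w :: "'a \<Rightarrow> real"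
  proof -
    have "(\<Sum>z\<in>Z. r z * max 0 (w z - (t - d))) - 2 * (\<Sum>z\<in>Z. r z * max 0 (w z - t)) + (\<Sum>z\<in>Z. r z * max 0 (w z - (t + d)))
        = (\<Sum>z\<in>Z. r z * (max 0 (w z - (t - d)) - 2 * max 0 (w z - t) + max 0 (w z - (t + d))))"
      by (simp add: sum.distrib sum_subtractf sum_distrib_left algebra_simps)
    also have "\<dots> = (\<Sum>z\<in>Z. if w z = t then d * r z else 0)"
      by (rule sum.cong[OF refl]) (simp add: second_diff[OF d0 W])
    also have "\<dots> = d * (\<Sum>z\<in>{z\<in>Z. w z = t}. r z)"
      using fZ by (simp add: sum.inter_filter[symmetric] sum_distrib_left)
    finally show ?thesis .
  qed
  have "d * (\<Sum>z\<in>{z\<in>Z. u z = t}. s z) = d * (\<Sum>z\<in>{z\<in>Z. v z = t}. s' z)"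
    using gen[of u s, OF du] gen[of v s', OF dv] E by metis
  then show ?thesis using d0 by simp
qed

locale fsetup =
  fixes f :: "real \<Rightarrow> real" and N :: nat and a :: "nat \<Rightarrow> real"
  assumes F: "in_F f" and PL: "piecewise_linear f N a" and a0: "a 0 = 0" and aN: "a N = 1"
    and sym: "\<forall>t\<in>{0..1}. finv f t = f t"
begin

lemma a_step: "i < N \<Longrightarrow> a i < a (Suc i)" using PL unfolding piecewise_linear_def by auto

lemma a_mono: "i \<le> j \<Longrightarrow> j \<le> N \<Longrightarrow> a i \<le> a j"
proof (induction j)
  case 0 then show ?case by simp
next
  case (Suc j)
  show ?case
  proof (cases "i = Suc j")
    case True then show ?thesis by simp
  next
    case False
    then have "a i \<le> a j" using Suc by auto
    also have "a j < a (Suc j)" using a_step Suc by auto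
    finally show ?thesis by simp
  qed
qed

lemma a_range: "i \<le> N \<Longrightarrow> 0 \<le> a i \<and> a i \<le> 1"
  using a_mono[of 0 i] a_mono[of i N] a0 aN by auto

lemma N_pos: "0 < N" using a0 aN by (cases N) auto

lemma f_range: "t \<in> {0..1} \<Longrightarrow> 0 \<le> f t \<and> f t \<le> 1 \<and> f t \<le> 1 - t"
  using F unfolding in_F_def by auto

lemma f_conv: "convex_on {0..1} f" using F unfolding in_F_def by auto

lemma f1: "f 1 = 0" using f_range[of 1] by auto

lemma f_anti:
  assumes "0 \<le> s" "s \<le> t" "t \<le> 1"
  shows "f t \<le> f s"
proof (cases "t = 1")
  case True then show ?thesis using f1 f_range[of s] assms by auto
next
  case False
  then have s1: "s < 1" using assms by auto
  define th where "th = (t - s) / (1 - s)"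
  have th: "0 \<le> th" "th \<le> 1" unfolding th_def using assms s1 by (auto simp: divide_simps)
  have "(1 - th) * s + th * 1 = t"
  proof -
    have "(1 - th) * s + th * 1 = s + th * (1 - s)" by (simp add: algebra_simps)
    also have "th * (1 - s) = t - s" unfolding th_def using s1 by simp
    finally show ?thesis by simp
  qed
  moreover have "f ((1 - th) *\<^sub>R s + th *\<^sub>R 1) \<le> (1 - th) * f s + th * f 1"
    using convex_onD[OF f_conv th(1) th(2), of s 1] assms by simp
  ultimately have "f t \<le> (1 - th) * f s" using f1 by simp
  also have "\<dots> \<le> f s" using th f_range[of s] assms by (simp add: mult_le_cancel_right1 algebra_simps)
  finally show ?thesis .
qed

lemma ff: assumes "\<beta> \<in> {0..1}" shows "f (f \<beta>) \<le> \<beta>"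
proof -
  have fb: "f \<beta> \<in> {0..1}" using f_range[OF assms] by auto
  have "f (f \<beta>) = finv f (f \<beta>)" using sym fb by auto
  also have "\<dots> = Inf {t \<in> {0..1}. f t \<le> f \<beta>}" unfolding finv_def by simp
  also have "\<dots> \<le> \<beta>" using assms by (intro cInf_lower) (auto intro: bdd_belowI[of _ 0])
  finally show ?thesis .
qed

definition vp :: "nat \<Rightarrow> real" where "vp z = (if z = 0 then 0 else a z - a (z - 1))"
definition vq :: "nat \<Rightarrow> real" where "vq z = (if z = 0 then 1 - f 0 else f (a (z - 1)) - f (a z))"
definition V :: chan where "V = ({..N}, \<lambda>x z. if z \<le> N then (if x then vq z else vp z) else 0)"
definition hl :: "real \<Rightarrow> real \<Rightarrow> real" where "hl l \<beta> = (1 - l) * (1 - f \<beta>) - l * \<beta>"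
definition g :: "real \<Rightarrow> nat \<Rightarrow> real" where "g l z = vq z - l * (vp z + vq z)"

lemma vp_nonneg: "z \<le> N \<Longrightarrow> 0 \<le> vp z"
  unfolding vp_def using a_mono[of "z - 1" z] by auto

lemma vp_pos: "1 \<le> z \<Longrightarrow> z \<le> N \<Longrightarrow> 0 < vp z"
  unfolding vp_def using a_step[of "z - 1"] by auto

lemma vq_nonneg: "z \<le> N \<Longrightarrow> 0 \<le> vq z"
proof (cases "z = 0")
  case True then show ?thesis unfolding vq_def using f_range[of 0] by auto
next
  case False
  assume "z \<le> N"
  then have "0 \<le> a (z-1)" "a (z-1) \<le> a z" "a z \<le> 1" using a_range a_mono[of "z-1" z] by auto
  then show ?thesis unfolding vq_def using False f_anti by auto
qed

lemma vp_sum: "k \<le> N \<Longrightarrow> (\<Sum>z\<le>k. vp z) = a k"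
proof (induction k)
  case 0 then show ?case unfolding vp_def using a0 by simp
next
  case (Suc k) then show ?case unfolding vp_def by simp
qed

lemma vq_sum: "k \<le> N \<Longrightarrow> (\<Sum>z\<le>k. vq z) = 1 - f (a k)"
proof (induction k)
  case 0 then show ?case unfolding vq_def using a0 by simp
next
  case (Suc k) then show ?case unfolding vq_def by simp
qed

lemma V_chan: "is_chan V"
  unfolding is_chan_def V_def
proof (intro conjI allI impI)
  show "finite (fst ({..N}, \<lambda>x z. if z \<le> N then if x then vq z else vp z else 0))" by simp
next
  fix x y show "0 \<le> snd ({..N}, \<lambda>x z. if z \<le> N then if x then vq z else vp z else 0) x y"
    using vp_nonneg vq_nonneg by auto
next
  fix x
  show "(\<Sum>y\<in>fst ({..N}, \<lambda>x z. if z \<le> N then if x then vq z else vp z else 0). snd ({..N}, \<lambda>x z. if z \<le> N then if x then vq z else vp z else 0) x y) = 1"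
  proof (cases x)
    case True
    have "(\<Sum>y\<in>{..N}. if y \<le> N then vq y else vp y) = (\<Sum>y\<le>N. vq y)" by (rule sum.cong) auto
    then show ?thesis using True vq_sum[of N] aN f1 by simp
  next
    case False
    have "(\<Sum>y\<in>{..N}. if y \<le> N then vp y else vp y) = (\<Sum>y\<le>N. vp y)" by simp
    then show ?thesis using False vp_sum[of N] aN by simp
  qed
next
  fix x y assume "y \<notin> fst ({..N}, \<lambda>x z. if z \<le> N then if x then vq z else vp z else 0)"
  then show "snd ({..N}, \<lambda>x z. if z \<le> N then if x then vq z else vp z else 0) x y = 0" by simp
qed

lemma H_V: "H V l = (\<Sum>z\<le>N. max 0 (g l z))"
  unfolding H_def V_def g_def by (intro sum.cong) auto

lemma g_prefix:
  assumes "k \<le> N" shows "(\<Sum>z\<le>k. g l z) = hl l (a k)"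
proof -
  have "(\<Sum>z\<le>k. g l z) = (\<Sum>z\<le>k. vq z) - l * ((\<Sum>z\<le>k. vp z) + (\<Sum>z\<le>k. vq z))"
    unfolding g_def by (simp add: sum_subtractf sum_distrib_left[symmetric] sum.distrib)
  also have "\<dots> = hl l (a k)" unfolding vp_sum[OF assms] vq_sum[OF assms] hl_def by (simp add: algebra_simps)
  finally show ?thesis .
qed

definition sig :: "nat \<Rightarrow> real" where "sig z = vq z / vp z"

lemma sig_step: assumes "1 \<le> z" "z < N" shows "sig (Suc z) \<le> sig z"
proof -
  have r: "0 \<le> a (z-1)" "a (z - 1) < a z" "a z < a (Suc z)" "a (Suc z) \<le> 1"
    using a_range[of "z-1"] a_range[of "Suc z"] a_step[of "z-1"] a_step[of z] assms by auto
  have "(f (a (z-1)) - f (a z)) / (a (z-1) - a z) \<le> (f (a z) - f (a (Suc z))) / (a z - a (Suc z))"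
    using convex_on_slope_le(1)[OF f_conv, of "a (z-1)" "a (Suc z)" "a z"]
      convex_on_slope_le(2)[OF f_conv, of "a (z-1)" "a (Suc z)" "a z"] r by auto
  moreover have "sig z = - ((f (a (z-1)) - f (a z)) / (a (z-1) - a z))"
    unfolding sig_def vq_def vp_def using assms r by (simp add: divide_simps) (simp add: algebra_simps)
  moreover have "sig (Suc z) = - ((f (a z) - f (a (Suc z))) / (a z - a (Suc z)))"
    unfolding sig_def vq_def vp_def using assms r by (simp add: divide_simps) (simp add: algebra_simps)
  ultimately show ?thesis by linarith
qed

lemma sig_anti: "1 \<le> z \<Longrightarrow> z \<le> z' \<Longrightarrow> z' \<le> N \<Longrightarrow> sig z' \<le> sig z"
proof (induction z')
  case 0 then show ?case by simp
next
  case (Suc z')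
  show ?case
  proof (cases "z = Suc z'")
    case True then show ?thesis by simp
  next
    case False
    then have "sig z' \<le> sig z" using Suc by auto
    moreover have "sig (Suc z') \<le> sig z'" using sig_step[of z'] Suc False by auto
    ultimately show ?thesis by simp
  qed
qed

lemma g_sig: "1 \<le> z \<Longrightarrow> z \<le> N \<Longrightarrow> g l z = vp z * ((1 - l) * sig z - l)"
  unfolding g_def sig_def using vp_pos[of z] by (simp add: field_simps)

lemma g_pos_mono:
  assumes "l \<le> 1" "1 \<le> z" "z \<le> z'" "z' \<le> N" "0 < g l z'"
  shows "0 < g l z"
proof -
  have "0 < (1 - l) * sig z' - l" using assms g_sig[of z' l] vp_pos[of z'] by (simp add: zero_less_mult_iff)
  moreover have "(1 - l) * sig z' \<le> (1 - l) * sig z" using sig_anti[of z z'] assms by (intro mult_left_mono) auto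
  ultimately have "0 < (1 - l) * sig z - l" by linarith
  then show ?thesis using g_sig[of z l] vp_pos[of z] assms by simp
qed

lemma H_V_attain:
  assumes "0 \<le> l" "l \<le> 1"
  shows "\<exists>k\<le>N. H V l = hl l (a k)"
proof -
  define S where "S = {z \<in> {1..N}. 0 < g l z}"
  define k where "k = (if S = {} then 0 else Max S)"
  have fS: "finite S" unfolding S_def by simp
  have kN: "k \<le> N" unfolding k_def S_def using fS by (auto simp: S_def)
  have below: "0 \<le> g l z" if "z \<le> k" for z
  proof (cases "z = 0")
    case True
    have "0 \<le> (1 - l) * (1 - f 0)" using assms f_range[of 0] by (intro mult_nonneg_nonneg) auto
    then show ?thesis unfolding g_def vp_def vq_def using True by (simp add: algebra_simps)
  next
    case False
    then have "S \<noteq> {}" using that unfolding k_def by auto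
    then have "k \<in> S" unfolding k_def using fS Max_in by auto
    then have "0 < g l k" "k \<le> N" unfolding S_def by auto
    then show ?thesis using g_pos_mono[of l z k] False that assms by auto
  qed
  have above: "g l z \<le> 0" if "k < z" "z \<le> N" for z
  proof (rule ccontr)
    assume "\<not> g l z \<le> 0"
    then have "z \<in> S" unfolding S_def using that by auto
    then have "z \<le> k" unfolding k_def using fS by auto
    then show False using that by simp
  qed
  have "H V l = (\<Sum>z\<le>N. if z \<le> k then g l z else 0)"
  proof (unfold H_V, rule sum.cong[OF refl])
    fix z assume "z \<in> {..N}"
    then show "max 0 (g l z) = (if z \<le> k then g l z else 0)"
      using below[of z] above[of z] by (cases "z \<le> k") auto
  qed
  also have "\<dots> = (\<Sum>z\<in>{..N} \<inter> {z. z \<le> k}. g l z)" by (simp add: sum.inter_restrict)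
  also have "{..N} \<inter> {z. z \<le> k} = {..k}" using kN by auto
  also have "(\<Sum>z\<le>k. g l z) = hl l (a k)" by (rule g_prefix[OF kN])
  finally show ?thesis using kN by auto
qed

lemma hl_ak_le: "j \<le> N \<Longrightarrow> hl l (a j) \<le> H V l"
proof -
  assume j: "j \<le> N"
  have "hl l (a j) = (\<Sum>z\<le>j. g l z)" using g_prefix[OF j] by simp
  also have "\<dots> \<le> (\<Sum>z\<le>j. max 0 (g l z))" by (intro sum_mono) auto
  also have "\<dots> \<le> (\<Sum>z\<le>N. max 0 (g l z))" using j by (intro sum_mono2) auto
  finally show ?thesis unfolding H_V .
qed

lemma seg: "\<beta> \<in> {a 0 .. a n} \<Longrightarrow> 1 \<le> n \<Longrightarrow> n \<le> N \<Longrightarrow> \<exists>k<n. a k \<le> \<beta> \<and> \<beta> \<le> a (Suc k)"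
proof (induction n)
  case 0 then show ?case by simp
next
  case (Suc n)
  show ?case
  proof (cases "n \<ge> 1 \<and> \<beta> \<le> a n")
    case True
    then obtain k where "k < n" "a k \<le> \<beta>" "\<beta> \<le> a (Suc k)" using Suc by auto
    then show ?thesis by (intro exI[of _ k]) auto
  next
    case False
    then have "a n \<le> \<beta>" using Suc by (cases "n = 0") auto
    then show ?thesis using Suc by (intro exI[of _ n]) auto
  qed
qed

lemma hl_le_HV:
  assumes "\<beta> \<in> {0..1}"
  shows "hl l \<beta> \<le> H V l"
proof -
  obtain k where k: "k < N" "a k \<le> \<beta>" "\<beta> \<le> a (Suc k)"
    using seg[of \<beta> N] assms a0 aN N_pos by auto
  obtain m c where mc: "\<forall>t\<in>{a k..a (Suc k)}. f t = m * t + c" using PL k unfolding piecewise_linear_def by blast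
  define u where "u = a k"
  define v where "v = a (Suc k)"
  have uv: "u < v" unfolding u_def v_def using a_step k by auto
  define th where "th = (\<beta> - u) / (v - u)"
  have th: "0 \<le> th" "th \<le> 1" unfolding th_def using k uv unfolding u_def v_def by (auto simp: divide_simps)
  have b: "\<beta> = (1 - th) * u + th * v"
  proof -
    have "(1 - th) * u + th * v = u + th * (v - u)" by (simp add: algebra_simps)
    also have "th * (v - u) = \<beta> - u" unfolding th_def using uv by simp
    finally show ?thesis by simp
  qed
  have fu: "f u = m * u + c" "f v = m * v + c" "f \<beta> = m * \<beta> + c"
    using mc k uv unfolding u_def v_def by auto
  have "hl l \<beta> = (1 - th) * hl l u + th * hl l v"
    unfolding hl_def fu by (subst b)+ (simp add: algebra_simps)
  also have "\<dots> \<le> (1 - th) * H V l + th * H V l"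
    using hl_ak_le[of k l] hl_ak_le[of "Suc k" l] k th unfolding u_def v_def
    by (intro add_mono mult_left_mono) auto
  also have "\<dots> = H V l" by (simp add: algebra_simps)
  finally show ?thesis .
qed

lemma fchan_fst: "fst (f_chan f \<alpha>) = {0, 1}" unfolding f_chan_def by simp

lemma fchan_chan: "\<alpha> \<in> {0..1} \<Longrightarrow> is_chan (f_chan f \<alpha>)"
  unfolding is_chan_def f_chan_def using f_range[of \<alpha>] by auto

lemma H_fchan: "H (f_chan f \<alpha>) l = max 0 (f \<alpha> - l * ((1 - \<alpha>) + f \<alpha>)) + max 0 ((1 - f \<alpha>) - l * (\<alpha> + (1 - f \<alpha>)))"
  unfolding H_def f_chan_def by simp

lemma hl_fchan: "hl l \<alpha> \<le> H (f_chan f \<alpha>) l"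
proof -
  have "hl l \<alpha> = (1 - f \<alpha>) - l * (\<alpha> + (1 - f \<alpha>))" unfolding hl_def by (simp add: algebra_simps)
  then show ?thesis unfolding H_fchan by simp
qed

lemma Hf_le_HV:
  assumes al: "\<alpha> \<in> {0..1}"
  shows "H (f_chan f \<alpha>) l \<le> H V l"
proof -
  consider "1 \<le> l" | "l \<le> 0" | "0 < l" "l < 1" by linarith
  then show ?thesis
  proof cases
    case 1 then show ?thesis using H_ge1[OF fchan_chan[OF al]] H_ge1[OF V_chan] by simp
  next
    case 2 then show ?thesis using H_le0[OF fchan_chan[OF al]] H_le0[OF V_chan] by simp
  next
    case 3
    define A where "A = f \<alpha> - l * ((1 - \<alpha>) + f \<alpha>)"
    define B where "B = (1 - f \<alpha>) - l * (\<alpha> + (1 - f \<alpha>))"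
    have HB: "B \<le> H V l"
    proof -
      have "B = hl l \<alpha>" unfolding B_def hl_def by (simp add: algebra_simps)
      then show ?thesis using hl_le_HV[OF al] by simp
    qed
    have HA: "A \<le> H V l"
    proof -
      have a1: "1 - \<alpha> \<in> {0..1}" using al by auto
      have "f (1 - \<alpha>) \<le> \<alpha>" "f \<alpha> \<le> 1 - \<alpha>" using f_range[OF a1] f_range[OF al] by auto
      then have "(1 - l) * f \<alpha> \<le> (1 - l) * (1 - f (1 - \<alpha>))" using 3 by (intro mult_left_mono) auto
      then have "A \<le> hl l (1 - \<alpha>)" unfolding A_def hl_def by (simp add: algebra_simps)
      then show ?thesis using hl_le_HV[OF a1, of l] by simp
    qed
    have HAB: "A + B \<le> H V l"
    proof -
      have "A + B = hl l 1" unfolding A_def B_def hl_def f1 by (simp add: algebra_simps)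
      then show ?thesis using hl_le_HV[of 1 l] by simp
    qed
    have "max 0 A + max 0 B \<le> H V l"
      using HA HB HAB H_nonneg[of V l] by (auto simp: max_def)
    then show ?thesis unfolding H_fchan A_def B_def .
  qed
qed

lemma HV_le_HL:
  assumes L: "is_chan L" and R: "\<forall>\<alpha>\<in>{0..1}. refines L (f_chan f \<alpha>)"
  shows "H V l \<le> H L l"
proof -
  consider "1 \<le> l" | "l \<le> 0" | "0 < l" "l < 1" by linarith
  then show ?thesis
  proof cases
    case 1 then show ?thesis using H_ge1[OF V_chan] H_nonneg[of L l] by simp
  next
    case 2 then show ?thesis using H_le0[OF L] H_le0[OF V_chan] by simp
  next
    case 3
    then obtain k where k: "k \<le> N" "H V l = hl l (a k)" using H_V_attain[of l] by auto
    have ak: "a k \<in> {0..1}" using a_range[OF k(1)] by auto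
    have "hl l (a k) \<le> H (f_chan f (a k)) l" by (rule hl_fchan)
    also have "\<dots> \<le> H L l" using R ak H_mono by blast
    finally show ?thesis using k by simp
  qed
qed

lemma HV_sym: "H V l = H V (1 - l) + 1 - 2 * l"
proof -
  consider "l < 0" | "1 < l" | "0 \<le> l" "l \<le> 1" by linarith
  then show ?thesis
  proof cases
    case 1 then show ?thesis using H_le0[OF V_chan, of l] H_ge1[OF V_chan, of "1 - l"] by simp
  next
    case 2 then show ?thesis using H_ge1[OF V_chan, of l] H_le0[OF V_chan, of "1 - l"] by simp
  next
    case 3
    have l': "0 \<le> 1 - l" "1 - l \<le> 1" using 3 by auto
    obtain k0 where k0: "k0 \<le> N" "H V l = hl l (a k0)" using H_V_attain[OF 3] by blast
    obtain k1 where k1: "k1 \<le> N" "H V (1 - l) = hl (1 - l) (a k1)" using H_V_attain[OF l'] by blast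
    define b0 where "b0 = a k0"
    define b1 where "b1 = a k1"
    have b: "b0 \<in> {0..1}" "b1 \<in> {0..1}" unfolding b0_def b1_def using a_range k0 k1 by auto
    have fb: "f b0 \<in> {0..1}" "f b1 \<in> {0..1}" using f_range b by auto
    have le1: "H V l \<le> H V (1 - l) + 1 - 2 * l"
    proof -
      have e: "hl (1-l) (f b0) + 1 - 2*l - hl l b0 = l * (b0 - f (f b0))" unfolding hl_def by (simp add: algebra_simps)
      have "0 \<le> l * (b0 - f (f b0))" using 3 ff[OF b(1)] by simp
      moreover have "hl (1-l) (f b0) \<le> H V (1 - l)" by (rule hl_le_HV[OF fb(1)])
      ultimately show ?thesis using e k0 unfolding b0_def by linarith
    qed
    have le2: "H V (1 - l) + 1 - 2 * l \<le> H V l"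
    proof -
      have e: "hl l (f b1) - (hl (1-l) b1 + 1 - 2*l) = (1 - l) * (b1 - f (f b1))" unfolding hl_def by (simp add: algebra_simps)
      have "0 \<le> (1 - l) * (b1 - f (f b1))" using 3 ff[OF b(2)] by simp
      moreover have "hl l (f b1) \<le> H V l" by (rule hl_le_HV[OF fb(2)])
      ultimately show ?thesis using e k1 unfolding b1_def by linarith
    qed
    show ?thesis using le1 le2 by simp
  qed
qed

definition sV :: "nat \<Rightarrow> real" where "sV z = vp z + vq z"
definition xV :: "nat \<Rightarrow> real" where "xV z = (if sV z = 0 then 0 else vq z / sV z)"
definition SV :: "nat set" where "SV = {z \<in> {..N}. 0 < sV z}"

lemma SV_fin: "finite SV" unfolding SV_def by simp

lemma sV_zero: "z \<le> N \<Longrightarrow> z \<notin> SV \<Longrightarrow> vp z = 0 \<and> vq z = 0"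
  unfolding SV_def sV_def using vp_nonneg[of z] vq_nonneg[of z] by auto

lemma xV_range: "z \<in> SV \<Longrightarrow> 0 \<le> xV z \<and> xV z \<le> 1"
  unfolding SV_def xV_def sV_def using vp_nonneg[of z] vq_nonneg[of z] by (auto simp: divide_le_eq_1)

lemma sum_SV:
  assumes "\<And>z. z \<le> N \<Longrightarrow> vp z = 0 \<Longrightarrow> vq z = 0 \<Longrightarrow> G z = 0"
  shows "(\<Sum>z\<le>N. G z) = (\<Sum>z\<in>SV. G z)"
proof -
  have "(\<Sum>z\<in>SV. G z) = (\<Sum>z\<in>{..N}. G z)"
  proof (rule sum.mono_neutral_left)
    show "finite {..N}" by simp
    show "SV \<subseteq> {..N}" unfolding SV_def by auto
    show "\<forall>z\<in>{..N} - SV. G z = 0"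
    proof
      fix z assume "z \<in> {..N} - SV"
      then have "z \<le> N" "z \<notin> SV" by auto
      then show "G z = 0" using sV_zero assms by blast
    qed
  qed
  then show ?thesis by simp
qed

lemma HV_meas: "H V l = (\<Sum>z\<in>SV. sV z * max 0 (xV z - l))"
proof -
  have "H V l = (\<Sum>z\<in>SV. max 0 (g l z))" unfolding H_V by (rule sum_SV) (simp add: g_def)
  also have "\<dots> = (\<Sum>z\<in>SV. sV z * max 0 (xV z - l))"
  proof (rule sum.cong[OF refl])
    fix z assume z: "z \<in> SV"
    then have p: "0 < sV z" unfolding SV_def by auto
    have "sV z * max 0 (xV z - l) = max 0 (sV z * (xV z - l))" using p by (simp add: max_mult_distrib_left)
    also have "sV z * (xV z - l) = g l z" unfolding g_def xV_def using p by (simp add: sV_def field_simps)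
    finally show "max 0 (g l z) = sV z * max 0 (xV z - l)" by simp
  qed
  finally show ?thesis .
qed

lemma HV_meas_swap: "(\<Sum>z\<in>SV. sV z * max 0 ((1 - xV z) - l)) = H V (1 - l) + 1 - 2 * l"
proof -
  have "H V (1 - l) + 1 - 2 * l = (\<Sum>z\<le>N. max 0 (vp z - l * (vp z + vq z)))"
  proof -
    have "(\<Sum>y\<in>fst V. max 0 (snd V False y - l * (snd V False y + snd V True y))) = (\<Sum>z\<le>N. max 0 (vp z - l * (vp z + vq z)))"
      unfolding V_def by (intro sum.cong) auto
    then show ?thesis using H_swap[OF V_chan, of l] by simp
  qed
  also have "\<dots> = (\<Sum>z\<in>SV. max 0 (vp z - l * (vp z + vq z)))" by (rule sum_SV) simp
  also have "\<dots> = (\<Sum>z\<in>SV. sV z * max 0 ((1 - xV z) - l))"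
  proof (rule sum.cong[OF refl])
    fix z assume z: "z \<in> SV"
    then have p: "0 < sV z" unfolding SV_def by auto
    have "sV z * max 0 ((1 - xV z) - l) = max 0 (sV z * ((1 - xV z) - l))" using p by (simp add: max_mult_distrib_left)
    also have "sV z * ((1 - xV z) - l) = vp z - l * (vp z + vq z)" unfolding xV_def using p by (simp add: sV_def field_simps)
    finally show "max 0 (vp z - l * (vp z + vq z)) = sV z * max 0 ((1 - xV z) - l)" by simp
  qed
  finally show ?thesis by simp
qed

definition mV :: "real \<Rightarrow> real" where "mV t = (\<Sum>z\<in>{z\<in>SV. xV z = t}. sV z)"
definition PV :: "real set" where "PV = xV ` SV"

lemma mV_sym: "mV (1 - t) = mV t"
proof -
  have E: "\<forall>l. (\<Sum>z\<in>SV. sV z * max 0 (xV z - l)) = (\<Sum>z\<in>SV. sV z * max 0 ((\<lambda>z. 1 - xV z) z - l))"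
  proof
    fix l
    have "(\<Sum>z\<in>SV. sV z * max 0 (xV z - l)) = H V l" by (rule HV_meas[symmetric])
    also have "\<dots> = H V (1 - l) + 1 - 2 * l" by (rule HV_sym)
    also have "\<dots> = (\<Sum>z\<in>SV. sV z * max 0 ((1 - xV z) - l))" by (rule HV_meas_swap[symmetric])
    finally show "(\<Sum>z\<in>SV. sV z * max 0 (xV z - l)) = (\<Sum>z\<in>SV. sV z * max 0 ((\<lambda>z. 1 - xV z) z - l))" by simp
  qed
  have "mV t = (\<Sum>z\<in>{z\<in>SV. 1 - xV z = t}. sV z)" unfolding mV_def by (rule kink_unique[OF SV_fin E])
  also have "{z\<in>SV. 1 - xV z = t} = {z\<in>SV. xV z = 1 - t}" by auto
  finally show ?thesis unfolding mV_def by simp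
qed

lemma mV_nonneg: "0 \<le> mV t" unfolding mV_def SV_def by (intro sum_nonneg) auto

lemma mV_pos: "t \<in> PV \<Longrightarrow> 0 < mV t"
proof -
  assume "t \<in> PV"
  then obtain z where z: "z \<in> SV" "xV z = t" unfolding PV_def by auto
  have "sV z \<le> mV t" unfolding mV_def using z SV_fin by (intro member_le_sum) (auto simp: SV_def)
  moreover have "0 < sV z" using z unfolding SV_def by auto
  ultimately show ?thesis by simp
qed

lemma mV_zero: "t \<notin> PV \<Longrightarrow> mV t = 0"
  unfolding mV_def PV_def by (rule sum.neutral) auto

lemma PV_sym: "t \<in> PV \<Longrightarrow> 1 - t \<in> PV"
proof -
  assume "t \<in> PV"
  then have "0 < mV t" by (rule mV_pos)
  then have "0 < mV (1 - t)" using mV_sym[of t] by simp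
  then show "1 - t \<in> PV" using mV_zero[of "1 - t"] by (cases "1 - t \<in> PV") auto
qed

lemma PV_fin: "finite PV" unfolding PV_def using SV_fin by simp

lemma PV_range: "t \<in> PV \<Longrightarrow> 0 \<le> t \<and> t \<le> 1" unfolding PV_def using xV_range by auto

lemma HV_P: "H V l = (\<Sum>t\<in>PV. mV t * max 0 (t - l))"
proof -
  have "H V l = (\<Sum>t\<in>PV. \<Sum>z\<in>{z\<in>SV. xV z = t}. sV z * max 0 (xV z - l))"
    unfolding HV_meas PV_def by (rule sum.image_gen[OF SV_fin])
  also have "\<dots> = (\<Sum>t\<in>PV. mV t * max 0 (t - l))"
    unfolding mV_def by (intro sum.cong refl) (simp add: sum_distrib_right)
  finally show ?thesis .
qed

definition Pl :: "real set" where "Pl = {t \<in> PV. t \<le> 1/2}"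
definition Plt :: "real set" where "Plt = {t \<in> PV. t < 1/2}"
definition Pg :: "real set" where "Pg = {t \<in> PV. 1/2 < t}"
definition KR :: nat where "KR = card Pl"
definition rr :: "nat \<Rightarrow> real" where "rr k = sorted_list_of_set Pl ! k"
definition wR :: "nat \<Rightarrow> real" where "wR k = (if rr k = 1/2 then mV (rr k) / 2 else mV (rr k))"
definition eR :: "nat \<Rightarrow> ereal" where "eR k = (if rr k = 0 then \<infinity> else ereal (ln ((1 - rr k) / rr k)))"
definition R :: chan where "R = vchoice KR wR (\<lambda>k. rr_chan (eR k))"

lemma Pl_fin: "finite Pl" unfolding Pl_def using PV_fin by simp

lemma rr_bij: "bij_betw rr {..<KR} Pl"
proof -
  have "bij_betw ((!) (sorted_list_of_set Pl)) {..<KR} Pl"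
    by (rule bij_betw_nth) (simp_all add: KR_def Pl_fin)
  moreover have "rr = (!) (sorted_list_of_set Pl)" unfolding rr_def by (rule ext) simp
  ultimately show ?thesis by simp
qed

lemma rr_in: "k < KR \<Longrightarrow> rr k \<in> Pl" using rr_bij unfolding bij_betw_def by auto

lemma rr_range: "k < KR \<Longrightarrow> 0 \<le> rr k \<and> rr k \<le> 1/2"
  using rr_in[of k] PV_range unfolding Pl_def by auto

lemma rho_eR: assumes "k < KR" shows "rho (eR k) = rr k"
proof (cases "rr k = 0")
  case True then show ?thesis unfolding eR_def rho_def by simp
next
  case False
  define t where "t = rr k"
  have t: "0 < t" "t \<le> 1/2" using rr_range[OF assms] False unfolding t_def by auto
  have q: "0 < (1 - t) / t" using t by simp
  have "rho (eR k) = 1 / (1 + (1 - t) / t)" unfolding eR_def rho_def using False q unfolding t_def by simp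
  also have "\<dots> = t" using t by (simp add: field_simps)
  finally show ?thesis unfolding t_def .
qed

lemma eR_nonneg: assumes "k < KR" shows "0 \<le> eR k"
proof (cases "rr k = 0")
  case True then show ?thesis unfolding eR_def by simp
next
  case False
  define t where "t = rr k"
  have t: "0 < t" "t \<le> 1/2" using rr_range[OF assms] False unfolding t_def by auto
  have "1 \<le> (1 - t) / t" using t by (simp add: field_simps)
  then have "0 \<le> ln ((1 - t) / t)" by simp
  then show ?thesis unfolding eR_def t_def using False by simp
qed

lemma wR_nonneg: "0 \<le> wR k" unfolding wR_def using mV_nonneg by simp

lemma H_R: "H R l = (\<Sum>k<KR. wR k * (max 0 (rr k - l) + max 0 (1 - rr k - l)))"
  unfolding R_def
  by (subst H_vchoice) (auto simp: rr_chan wR_nonneg H_rr rho_eR intro!: sum.cong)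

lemma Pg_img: "Pg = (\<lambda>t. 1 - t) ` Plt"
proof
  show "Pg \<subseteq> (\<lambda>t. 1 - t) ` Plt"
  proof
    fix u assume "u \<in> Pg"
    then have "1 - u \<in> Plt" "u = 1 - (1 - u)" unfolding Pg_def Plt_def using PV_sym by auto
    then show "u \<in> (\<lambda>t. 1 - t) ` Plt" by blast
  qed
  show "(\<lambda>t. 1 - t) ` Plt \<subseteq> Pg" unfolding Pg_def Plt_def using PV_sym by auto
qed

lemma inj_refl: "inj_on (\<lambda>t::real. 1 - t) A" by (rule inj_onI) simp

lemma HR_eq: "H R l = H V l"
proof -
  let ?A = "\<lambda>t. max 0 (t - l)" and ?B = "\<lambda>t. max 0 (1 - t - l)"
  let ?W = "\<lambda>t. if t = 1/2 then mV t / 2 else mV t"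
  have "H R l = (\<Sum>k<KR. ?W (rr k) * (?A (rr k) + ?B (rr k)))" unfolding H_R wR_def by simp
  also have "\<dots> = (\<Sum>t\<in>Pl. ?W t * (?A t + ?B t))"
    by (rule sum.reindex_bij_betw[OF rr_bij])
  also have "\<dots> = (\<Sum>t\<in>Pl. mV t * ?A t + (if t < 1/2 then mV t * ?B t else 0))"
  proof (rule sum.cong[OF refl])
    fix t assume "t \<in> Pl"
    then have "t \<le> 1/2" unfolding Pl_def by auto
    show "?W t * (?A t + ?B t) = mV t * ?A t + (if t < 1/2 then mV t * ?B t else 0)"
    proof (cases "t = 1/2")
      case True
      have e: "1 - t - l = t - l" using True by simp
      show ?thesis using True by (simp add: e)
    next
      case False
      then show ?thesis using \<open>t \<le> 1/2\<close> by (simp add: algebra_simps)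
    qed
  qed
  also have "\<dots> = (\<Sum>t\<in>Pl. mV t * ?A t) + (\<Sum>t\<in>Plt. mV t * ?B t)"
  proof -
    have "(\<Sum>t\<in>Pl. (if t < 1/2 then mV t * ?B t else 0)) = (\<Sum>t\<in>{t\<in>Pl. t < 1/2}. mV t * ?B t)"
      using Pl_fin by (simp add: sum.inter_filter)
    also have "{t\<in>Pl. t < 1/2} = Plt" unfolding Pl_def Plt_def by auto
    finally show ?thesis by (simp add: sum.distrib)
  qed
  also have "(\<Sum>t\<in>Plt. mV t * ?B t) = (\<Sum>t\<in>Pg. mV t * ?A t)"
  proof -
    have "(\<Sum>t\<in>Pg. mV t * ?A t) = (\<Sum>t\<in>Plt. mV (1 - t) * ?A (1 - t))"
      unfolding Pg_img by (rule sum.reindex[OF inj_refl, unfolded comp_def])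
    also have "\<dots> = (\<Sum>t\<in>Plt. mV t * ?B t)" by (simp add: mV_sym)
    finally show ?thesis by simp
  qed
  also have "(\<Sum>t\<in>Pl. mV t * ?A t) + (\<Sum>t\<in>Pg. mV t * ?A t) = (\<Sum>t\<in>Pl \<union> Pg. mV t * ?A t)"
    by (rule sum.union_disjoint[symmetric]) (auto simp: Pl_def Pg_def PV_fin)
  also have "Pl \<union> Pg = PV" unfolding Pl_def Pg_def by auto
  finally show ?thesis unfolding HV_P .
qed

lemma KR_bound: "KR \<le> N div 2 + 1"
proof -
  have f: "finite Plt" "finite Pg" "finite Pl" using PV_fin unfolding Plt_def Pg_def Pl_def by auto
  have c1: "card Pl = card Plt + card ({1/2} \<inter> PV)"
  proof -
    have "Pl = Plt \<union> ({1/2} \<inter> PV)" unfolding Pl_def Plt_def by auto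
    moreover have "Plt \<inter> ({1/2} \<inter> PV) = {}" unfolding Plt_def by auto
    ultimately show ?thesis using f by (simp add: card_Un_disjoint)
  qed
  have c2: "card PV = card Pl + card Pg"
  proof -
    have "PV = Pl \<union> Pg" unfolding Pl_def Pg_def by auto
    moreover have "Pl \<inter> Pg = {}" unfolding Pl_def Pg_def by auto
    ultimately show ?thesis using f by (simp add: card_Un_disjoint)
  qed
  have c3: "card Pg = card Plt" unfolding Pg_img by (rule card_image[OF inj_refl])
  have c4: "card ({1/2::real} \<inter> PV) \<le> 1" by (rule order_trans[OF card_mono[of "{1/2}"]]) auto
  have c5: "card PV \<le> Suc N"
  proof -
    have "card PV \<le> card SV" unfolding PV_def by (rule card_image_le[OF SV_fin])
    also have "card SV \<le> card {..N}" unfolding SV_def by (rule card_mono) auto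
    finally show ?thesis by simp
  qed
  have "2 * KR \<le> N + 2" unfolding KR_def using c1 c2 c3 c4 c5 by linarith
  then show ?thesis by linarith
qed

lemma wR_sum: "(\<Sum>k<KR. wR k) = 1"
proof -
  have "H R 0 = (\<Sum>k<KR. wR k)" unfolding H_R
  proof (rule sum.cong[OF refl])
    fix k assume "k \<in> {..<KR}"
    then have "0 \<le> rr k" "rr k \<le> 1/2" using rr_range by auto
    then have "max 0 (rr k - 0) = rr k" "max 0 (1 - rr k - 0) = 1 - rr k" by auto
    then show "wR k * (max 0 (rr k - 0) + max 0 (1 - rr k - 0)) = wR k" by simp
  qed
  moreover have "H R 0 = 1" unfolding HR_eq using H_le0[OF V_chan, of 0] by simp
  ultimately show ?thesis by simp
qed

lemma R_chan: "is_chan R"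
  unfolding R_def by (rule vchoice_chan) (auto simp: rr_chan wR_nonneg wR_sum)

lemma R_glb: "is_glb_chan {f_chan f a | a. a \<in> {0..1}} R"
  unfolding is_glb_chan_def
proof (intro conjI ballI allI impI R_chan)
  fix C assume "C \<in> {f_chan f a | a. a \<in> {0..1}}"
  then obtain \<alpha> where al: "\<alpha> \<in> {0..1}" "C = f_chan f \<alpha>" by auto
  show "refines R C" unfolding al(2)
    by (rule BL[OF R_chan fchan_chan[OF al(1)]]) (simp add: HR_eq Hf_le_HV[OF al(1)])
next
  fix L assume L: "is_chan L \<and> (\<forall>C\<in>{f_chan f a | a. a \<in> {0..1}}. refines L C)"
  have "\<forall>\<alpha>\<in>{0..1}. refines L (f_chan f \<alpha>)"
  proof
    fix \<alpha> :: real assume "\<alpha> \<in> {0..1}"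
    then have "f_chan f \<alpha> \<in> {f_chan f a | a. a \<in> {0..1}}" by blast
    then show "refines L (f_chan f \<alpha>)" using L by blast
  qed
  then show "refines L R"
    using L by (intro BL) (auto simp: R_chan HR_eq HV_le_HL)
qed

lemma main:
  "\<exists>K (eps :: nat \<Rightarrow> ereal) (w :: nat \<Rightarrow> real).
           K \<le> N div 2 + 1 \<and> (\<forall>k<K. 0 \<le> eps k \<and> 0 \<le> w k) \<and> (\<Sum>k<K. w k) = 1
           \<and> chan_equiv (C_of f) (vchoice K w (\<lambda>k. rr_chan (eps k)))"
proof (intro exI conjI)
  let ?S = "{f_chan f a | a. a \<in> {0..1}}"
  have g: "is_glb_chan ?S (C_of f)" unfolding C_of_def chan_min_def by (rule someI[of "is_glb_chan ?S" R, OF R_glb])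
  show "chan_equiv (C_of f) (vchoice KR wR (\<lambda>k. rr_chan (eR k)))"
    unfolding chan_equiv_def R_def[symmetric]
    using g R_glb unfolding is_glb_chan_def by blast
  show "KR \<le> N div 2 + 1" by (rule KR_bound)
  show "\<forall>k<KR. 0 \<le> eR k \<and> 0 \<le> wR k" using eR_nonneg wR_nonneg by auto
  show "(\<Sum>k<KR. wR k) = 1" by (rule wR_sum)
qed

end


theorem mainTheorem10:
  fixes f :: "real \<Rightarrow> real" and N :: nat and a :: "nat \<Rightarrow> real"
  assumes "in_F f"
    and "piecewise_linear f N a" and "a 0 = 0" and "a N = 1"
    and "\<forall>t\<in>{0..1}. finv f t = f t"
  shows "\<exists>K (eps :: nat \<Rightarrow> ereal) (w :: nat \<Rightarrow> real).
           K \<le> N div 2 + 1 \<and> (\<forall>k<K. 0 \<le> eps k \<and> 0 \<le> w k) \<and> (\<Sum>k<K. w k) = 1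
           \<and> chan_equiv (C_of f) (vchoice K w (\<lambda>k. rr_chan (eps k)))"
  by (rule fsetup.main[OF fsetup.intro[OF assms]])

end
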